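(* Let $q=p^e$ with $p$ an odd prime and $e\ge1$, let $m\ge3$ be odd, $D=\{x\in\mathbb{F}_{q^m}:\mathrm{Tr}_{q^m/q}(x^2)=0\}=\{d_1,\dots,d_n\}$ (so $n=q^{m-1}$), and let $\alpha$ be a generator of $\mathbb{F}_{q^m}^*$. Let $G_2$ be the $(m+1)\times n$ matrix whose first row is $(1,\dots,1)$, second row $(\mathrm{Tr}_{q^m/q}(d_j))_j$, third row $(\mathrm{Tr}_{q^m/q}(\alpha d_j)+1)_j$, and $(i+2)$-th row $(\mathrm{Tr}_{q^m/q}(\alpha^id_j))_j$ for $2\le i\le m-1$. Let $G_2'=[I_{m+1}:G_2]$ and let $\overline{\mathcal{C}_D}'$ be the code generated by $G_2'$. Then $\overline{\mathcal{C}_D}'$ has parameters $[q^{m-1}+m+1,\ m+1,\ d']$ with $d'\ge (q-1)q^{\frac{m-3}{2}}(q^{\frac{m-1}{2}}-1)+1$, and $\overline{\mathcal{C}_D}'^{\perp}$ has parameters $[q^{m-1}+m+1,\ q^{m-1},\ d'^{\perp}]$ with $2\le d'^{\perp}\le3$.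
   Context: $\mathrm{Tr}_{q^m/q}$ is the trace map; $I_{m+1}$ is the identity matrix of size $m+1$. $G_2$ is a generator matrix of $\{(\mathrm{Tr}_{q^m/q}(bx)+c)_{x\in D}:b\in\mathbb{F}_{q^m},c\in\mathbb{F}_q\}$. *)

theory Defs
  imports Main "HOL-Computational_Algebra.Primes"
begin

text \<open>The finite field F_{q^m} is modelled by a finite field type 'a with CARD('a) = q^m;
  the subfield F_q is the set of elements fixed by x \<mapsto> x^q.\<close>

definition subfield_Fq :: "nat \<Rightarrow> 'a::field set" where
  "subfield_Fq q = {x. x ^ q = x}"

definition trace :: "nat \<Rightarrow> nat \<Rightarrow> 'a::field \<Rightarrow> 'a" where
  "trace q m x = (\<Sum>i<m. x ^ (q ^ i))"

definition words :: "nat \<Rightarrow> nat \<Rightarrow> (nat \<Rightarrow> 'a::field) set" where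
  "words q N = {v. (\<forall>i<N. v i \<in> subfield_Fq q) \<and> (\<forall>i\<ge>N. v i = 0)}"

definition gen_code :: "nat \<Rightarrow> nat \<Rightarrow> nat \<Rightarrow> (nat \<Rightarrow> nat \<Rightarrow> 'a::field) \<Rightarrow> (nat \<Rightarrow> 'a) set" where
  "gen_code q k N G = {(\<lambda>c. if c < N then (\<Sum>r<k. a r * G r c) else 0) | a. \<forall>r<k. a r \<in> subfield_Fq q}"

definition dual_code :: "nat \<Rightarrow> nat \<Rightarrow> (nat \<Rightarrow> 'a::field) set \<Rightarrow> (nat \<Rightarrow> 'a) set" where
  "dual_code q N C = {v \<in> words q N. \<forall>c\<in>C. (\<Sum>i<N. v i * c i) = 0}"

definition weight :: "nat \<Rightarrow> (nat \<Rightarrow> 'a::zero) \<Rightarrow> nat" where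
  "weight N v = card {i. i < N \<and> v i \<noteq> 0}"

definition min_dist :: "nat \<Rightarrow> (nat \<Rightarrow> 'a::zero) set \<Rightarrow> nat" where
  "min_dist N C = Min (weight N ` (C - {(\<lambda>_. 0)}))"

definition code_params :: "nat \<Rightarrow> (nat \<Rightarrow> 'a::field) set \<Rightarrow> nat \<Rightarrow> nat \<Rightarrow> nat \<Rightarrow> bool" where
  "code_params q C N k d \<longleftrightarrow> C \<subseteq> words q N \<and> card C = q ^ k \<and> min_dist N C = d"

text \<open>The matrix G_2' = [I_{m+1} : G_2], rows 0..m, columns 0..m+n; d enumerates D.\<close>
definition G2' :: "nat \<Rightarrow> nat \<Rightarrow> 'a::field \<Rightarrow> (nat \<Rightarrow> 'a) \<Rightarrow> nat \<Rightarrow> nat \<Rightarrow> 'a" where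
  "G2' q m \<alpha> d r c =
     (if c < m + 1 then (if r = c then 1 else 0)
      else (let j = c - (m + 1) in
            if r = 0 then 1
            else if r = 1 then trace q m (d j)
            else if r = 2 then trace q m (\<alpha> * d j) + 1
            else trace q m (\<alpha> ^ (r - 1) * d j)))"

end

theory Submission
  imports Defs Complex_Main "HOL-Computational_Algebra.Polynomial" "HOL-Library.FuncSet"
begin

locale ctx =
  fixes p e q m :: nat and \<alpha> :: "'a::{finite,field}"
  assumes p_prime: "prime p" and p_odd: "odd p" and e_ge: "e \<ge> 1" and q_def: "q = p^e"
    and m_ge: "m \<ge> 3" and m_odd: "odd m" and card_F: "card (UNIV::'a set) = q^m"
    and gen: "\<forall>y::'a. y \<noteq> 0 \<longrightarrow> (\<exists>k::nat. y = \<alpha>^k)"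
begin

lemma p_ge3: "p \<ge> 3"
  using p_prime p_odd prime_ge_2_nat[of p] by (cases "p = 2") auto

lemma q_ge3: "q \<ge> 3"
proof -
  have "p ^ 1 \<le> p ^ e" using e_ge p_ge3 by (intro power_increasing) auto
  thus ?thesis using p_ge3 q_def by simp
qed

lemma q_odd: "odd q" using p_odd q_def by simp

lemma of_nat_card_zero: "of_nat (card (UNIV::'a set)) = (0::'a)"
proof -
  have "(\<Sum>y\<in>UNIV. y + 1) = (\<Sum>y\<in>(UNIV::'a set). y)"
    by (rule sum.reindex_bij_witness[of _ "\<lambda>y. y - 1" "\<lambda>y. y + 1"]) auto
  hence "(\<Sum>y\<in>(UNIV::'a set). y) + of_nat (card (UNIV::'a set)) = (\<Sum>y\<in>(UNIV::'a set). y)"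
    by (simp add: sum.distrib)
  thus ?thesis by simp
qed

lemma char_p: "of_nat p = (0::'a)"
proof -
  have "(of_nat p :: 'a) ^ (e*m) = 0"
    using of_nat_card_zero card_F q_def by (simp add: power_mult)
  thus ?thesis by simp
qed

lemma CHAR_eq: "CHAR('a) = p"
proof -
  have "CHAR('a) dvd p" using char_p of_nat_eq_0_iff_char_dvd by blast
  moreover have "CHAR('a) \<noteq> 1"
    using of_nat_CHAR[where 'a='a] by auto
  ultimately show ?thesis using p_prime by (metis prime_nat_iff)
qed

lemma CHAR_prime: "prime CHAR('a)" using CHAR_eq p_prime by simp

lemma frob_add: "((x::'a) + y) ^ (q^i) = x^(q^i) + y^(q^i)"
  by (rule freshmans_dream'[where n="e*i", OF CHAR_prime]) (simp add: CHAR_eq q_def power_mult)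

lemma frob_sum: "(sum (f::_ \<Rightarrow> 'a) A) ^ (q^i) = (\<Sum>j\<in>A. f j ^ (q^i))"
  by (rule freshmans_dream_sum'[where n="e*i", OF CHAR_prime]) (simp add: CHAR_eq q_def power_mult)

lemma frob_minus: "(-(x::'a)) ^ (q^i) = - (x^(q^i))"
  using q_odd by (simp add: power_minus_odd)

lemma pow_card: "(x::'a) ^ (q^m) = x"
proof (cases "x = 0")
  case False
  have "x * (\<Prod>y\<in>UNIV-{0}. x * y) = x * x ^ (card (UNIV :: 'a set) - 1) * \<Prod>(UNIV-{0})"
    by (simp add: prod.distrib mult_ac)
  also have "x * x ^ (card (UNIV :: 'a set) - 1) = x ^ Suc (card (UNIV :: 'a set) - 1)"
    by (subst power_Suc) auto
  also have "Suc (card (UNIV :: 'a set) - 1) = card (UNIV :: 'a set)"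
    using finite_UNIV_card_ge_0[where ?'a = 'a] by simp
  also have "(\<Prod>y\<in>UNIV-{0}. x * y) = (\<Prod>y\<in>UNIV-{0}. y)"
    by (rule prod.reindex_bij_witness[of _ "\<lambda>y. y / x" "\<lambda>y. x * y"]) (use False in auto)
  finally show ?thesis
    using card_F by simp
qed (use m_ge q_ge3 in auto)

lemma two_nz: "(2::'a) \<noteq> 0"
proof
  assume "(2::'a) = 0"
  hence "(of_nat 2::'a) = 0" by simp
  hence "p dvd 2" using CHAR_eq of_nat_eq_0_iff_char_dvd by metis
  thus False using p_ge3 by (auto dest: dvd_imp_le)
qed

end

context ctx
begin

abbreviation K :: "'a set" where "K \<equiv> subfield_Fq q"
abbreviation Tr :: "'a \<Rightarrow> 'a" where "Tr \<equiv> trace q m"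

lemma K_iff: "x \<in> K \<longleftrightarrow> x ^ q = x" by (simp add: subfield_Fq_def)

lemma K_0[simp]: "0 \<in> K" using q_ge3 by (simp add: K_iff)
lemma K_1[simp]: "1 \<in> K" by (simp add: K_iff)
lemma K_add[intro]: "x \<in> K \<Longrightarrow> y \<in> K \<Longrightarrow> x + y \<in> K"
  using frob_add[of x y 1] by (simp add: K_iff)
lemma K_uminus[intro]: "x \<in> K \<Longrightarrow> -x \<in> K"
  using frob_minus[of x 1] by (simp add: K_iff)
lemma K_diff[intro]: "x \<in> K \<Longrightarrow> y \<in> K \<Longrightarrow> x - y \<in> K"
  using K_add[of x "-y"] K_uminus[of y] by simp
lemma K_mult[intro]: "x \<in> K \<Longrightarrow> y \<in> K \<Longrightarrow> x * y \<in> K"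
  by (simp add: K_iff power_mult_distrib)
lemma K_inverse[intro]: "x \<in> K \<Longrightarrow> inverse x \<in> K"
  by (simp add: K_iff power_inverse)
lemma K_divide[intro]: "x \<in> K \<Longrightarrow> y \<in> K \<Longrightarrow> x / y \<in> K"
  by (simp add: divide_inverse K_mult K_inverse)
lemma K_2[simp]: "2 \<in> K" using K_add[of 1 1] by (simp add: one_add_one)
lemma K_pow[intro]: "x \<in> K \<Longrightarrow> x ^ k \<in> K"
  by (induct k) (auto simp: K_mult)
lemma K_sum[intro]: "(\<And>i. i \<in> A \<Longrightarrow> f i \<in> K) \<Longrightarrow> sum f A \<in> K"
  by (induct A rule: infinite_finite_induct) auto

lemma K_powq: "x \<in> K \<Longrightarrow> x ^ (q^i) = x"
proof (induct i)
  case (Suc i)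
  then show ?case by (simp add: power_mult K_iff)
qed simp

lemma Tr_def': "Tr x = (\<Sum>i<m. x ^ (q ^ i))" by (simp add: trace_def)

lemma Tr_add: "Tr (x + y) = Tr x + Tr y"
  by (simp add: trace_def frob_add sum.distrib)

lemma Tr_minus: "Tr (- x) = - Tr x"
  by (simp add: trace_def frob_minus sum_negf)

lemma Tr_diff: "Tr (x - y) = Tr x - Tr y"
  using Tr_add[of x "-y"] Tr_minus[of y] by simp

lemma Tr_0[simp]: "Tr 0 = 0"
  using q_ge3 by (simp add: trace_def power_0_left)

lemma Tr_scale: "u \<in> K \<Longrightarrow> Tr (u * x) = u * Tr x"
  by (simp add: trace_def power_mult_distrib K_powq sum_distrib_left)

lemma Tr_sum: "Tr (sum f A) = (\<Sum>i\<in>A. Tr (f i))"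
  by (induct A rule: infinite_finite_induct) (auto simp: Tr_add)

lemma Tr_in_K: "Tr x \<in> K"
proof -
  let ?f = "\<lambda>i. x ^ (q ^ i)"
  have "Tr x ^ q = (\<Sum>i<m. ?f i ^ (q^1))"
    unfolding trace_def using frob_sum[of ?f "{..<m}" 1] by simp
  also have "\<dots> = (\<Sum>i<m. ?f (Suc i))"
    by (simp add: power_mult[symmetric] mult.commute)
  also have "\<dots> = (\<Sum>i<m. ?f i)"
  proof -
    have "(\<Sum>i<Suc m. ?f i) = ?f 0 + (\<Sum>i<m. ?f (Suc i))"
      by (rule sum.lessThan_Suc_shift)
    moreover have "(\<Sum>i<Suc m. ?f i) = (\<Sum>i<m. ?f i) + ?f m" by simp
    moreover have "?f m = ?f 0" using pow_card by simp
    ultimately show ?thesis by (simp add: add.commute)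
  qed
  finally show ?thesis by (simp add: K_iff trace_def)
qed

end

context ctx
begin

definition Nm :: nat where "Nm = q^m - 1"
definition N1 :: nat where "N1 = (\<Sum>i<m. q^i)"

lemma qm_ge: "q^m \<ge> 27"
proof -
  have "3^3 \<le> q^3" using q_ge3 by (intro power_mono) auto
  also have "q^3 \<le> q^m" using q_ge3 m_ge by (intro power_increasing) auto
  finally show ?thesis by simp
qed

lemma Nm_pos: "Nm > 0" using qm_ge by (simp add: Nm_def)

lemma Suc_Nm: "Suc Nm = q^m" using qm_ge by (simp add: Nm_def)

lemma Nm_even: "even Nm" using q_odd qm_ge by (simp add: Nm_def)

lemma N1_mult: "Nm = N1 * (q - 1)"
proof -
  have "int q ^ m - 1 = (int q - 1) * (\<Sum>i<m. int q ^ i)" by (rule power_diff_1_eq)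
  moreover have "int Nm = int q ^ m - 1" using qm_ge by (simp add: of_nat_diff Nm_def)
  moreover have "int (N1 * (q - 1)) = (int q - 1) * (\<Sum>i<m. int q ^ i)"
    using q_ge3 by (simp add: of_nat_diff N1_def)
  ultimately have "int Nm = int (N1 * (q - 1))" by simp
  thus ?thesis by (simp only: of_nat_eq_iff)
qed

lemma N1_odd_aux: "even (\<Sum>i<k. q^i) \<longleftrightarrow> even k"
  by (induct k) (auto simp: q_odd)

lemma N1_odd: "odd N1" using N1_odd_aux m_odd by (simp add: N1_def)

lemma N1_pos: "N1 > 0" using N1_odd by (cases N1) auto

lemma alpha_nz: "\<alpha> \<noteq> 0"
proof
  assume a0: "\<alpha> = 0"
  have "(-1::'a) \<noteq> 0" by simp
  then obtain k where k: "(-1::'a) = \<alpha> ^ k" using gen by blast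
  show False
  proof (cases k)
    case 0
    hence "(-1::'a) = 1" using k by simp
    hence "(1::'a) + 1 = 0" by (metis add.right_inverse)
    thus ?thesis using two_nz by (simp add: one_add_one)
  next
    case (Suc j) thus ?thesis using k a0 by simp
  qed
qed

lemma alpha_Nm: "\<alpha> ^ Nm = 1"
proof -
  have "\<alpha> * \<alpha> ^ Nm = \<alpha> ^ (q^m)" by (simp flip: power_Suc add: Suc_Nm)
  also have "\<dots> = \<alpha> * 1" by (simp add: pow_card)
  finally show ?thesis using alpha_nz by simp
qed

lemma alpha_pow_mod: "\<alpha> ^ k = \<alpha> ^ (k mod Nm)"
proof -
  have "\<alpha> ^ k = \<alpha> ^ (Nm * (k div Nm) + k mod Nm)" by (simp only: mult_div_mod_eq)
  also have "\<dots> = \<alpha> ^ (k mod Nm)" by (simp only: power_add power_mult alpha_Nm power_one mult_1)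
  finally show ?thesis .
qed

lemma alpha_img: "(\<lambda>k. \<alpha> ^ k) ` {..<Nm} = UNIV - {0}"
proof
  show "(\<lambda>k. \<alpha> ^ k) ` {..<Nm} \<subseteq> UNIV - {0}" using alpha_nz by auto
  show "UNIV - {0} \<subseteq> (\<lambda>k. \<alpha> ^ k) ` {..<Nm}"
  proof
    fix y :: 'a assume "y \<in> UNIV - {0}"
    then obtain k where "y = \<alpha> ^ k" using gen by blast
    hence "y = \<alpha> ^ (k mod Nm)" using alpha_pow_mod by simp
    moreover have "k mod Nm < Nm" using Nm_pos by simp
    ultimately show "y \<in> (\<lambda>k. \<alpha> ^ k) ` {..<Nm}" by blast
  qed
qed

lemma alpha_inj: "inj_on (\<lambda>k. \<alpha> ^ k) {..<Nm}"
proof (rule eq_card_imp_inj_on)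
  have "card (UNIV - {0::'a}) = Nm" using card_F by (simp add: card_Diff_singleton Nm_def)
  thus "card ((\<lambda>k. \<alpha> ^ k) ` {..<Nm}) = card {..<Nm}" by (simp add: alpha_img)
qed simp

lemma alpha_pow_eq_iff: "\<alpha> ^ i = \<alpha> ^ j \<longleftrightarrow> i mod Nm = j mod Nm"
proof
  assume "\<alpha> ^ i = \<alpha> ^ j"
  hence "\<alpha> ^ (i mod Nm) = \<alpha> ^ (j mod Nm)" by (metis alpha_pow_mod)
  thus "i mod Nm = j mod Nm"
    using alpha_inj Nm_pos by (auto dest: inj_onD)
qed (metis alpha_pow_mod)

lemma alpha_pow_eq_1: "\<alpha> ^ i = 1 \<longleftrightarrow> Nm dvd i"
  using alpha_pow_eq_iff[of i 0] by (simp add: mod_eq_0_iff_dvd)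

lemma K_char: "K = insert 0 ((\<lambda>k. \<alpha> ^ (N1 * k)) ` {..<q-1})"
proof
  show "K \<subseteq> insert 0 ((\<lambda>k. \<alpha> ^ (N1 * k)) ` {..<q-1})"
  proof
    fix x assume xK: "x \<in> K"
    show "x \<in> insert 0 ((\<lambda>k. \<alpha> ^ (N1 * k)) ` {..<q-1})"
    proof (cases "x = 0")
      case False
      then obtain j where j: "j < Nm" "x = \<alpha> ^ j" using alpha_img by blast
      have "\<alpha> ^ j * \<alpha> ^ (j * (q - 1)) = \<alpha> ^ j * 1"
      proof -
        have "\<alpha> ^ j * \<alpha> ^ (j * (q - 1)) = \<alpha> ^ (j * q)"
        proof -
          have "j * q = j + j * (q - 1)" using q_ge3 by (cases q) auto
          thus ?thesis by (simp add: power_add)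
        qed
        also have "\<dots> = x ^ q" using j by (simp add: power_mult)
        also have "\<dots> = \<alpha> ^ j * 1" using xK j by (simp add: K_iff)
        finally show ?thesis .
      qed
      hence "\<alpha> ^ (j * (q - 1)) = 1" using alpha_nz by simp
      hence "N1 * (q - 1) dvd j * (q - 1)" using alpha_pow_eq_1 N1_mult by simp
      hence "N1 dvd j" using q_ge3 by simp
      then obtain k where k: "j = N1 * k" by blast
      have "k < q - 1"
      proof (rule ccontr)
        assume "\<not> k < q - 1"
        hence "N1 * (q - 1) \<le> N1 * k" by simp
        thus False using j k N1_mult by simp
      qed
      thus ?thesis using j k by blast
    qed simp
  qed
  show "insert 0 ((\<lambda>k. \<alpha> ^ (N1 * k)) ` {..<q-1}) \<subseteq> K"
  proof (clarsimp)
    fix k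
    have "(\<alpha> ^ (N1 * k)) ^ q = \<alpha> ^ (N1 * k * q)" by (simp add: power_mult)
    also have "N1 * k * q = N1 * k + Nm * k"
    proof -
      have "N1 * k * q = N1 * k * (Suc (q - 1))" using q_ge3 by simp
      thus ?thesis using N1_mult by (simp add: algebra_simps)
    qed
    also have "\<alpha> ^ \<dots> = \<alpha> ^ (N1 * k)" by (simp add: power_add power_mult alpha_Nm)
    finally show "\<alpha> ^ (N1 * k) \<in> K" by (simp add: K_iff)
  qed
qed

lemma card_K: "card K = q"
proof -
  have inj: "inj_on (\<lambda>k. \<alpha> ^ (N1 * k)) {..<q-1}"
  proof (rule inj_onI)
    fix i j assume ij: "i \<in> {..<q-1}" "j \<in> {..<q-1}" "\<alpha> ^ (N1 * i) = \<alpha> ^ (N1 * j)"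
    have "N1 * i < Nm" "N1 * j < Nm" using ij N1_mult N1_pos by auto
    hence "N1 * i = N1 * j" using ij(3) alpha_pow_eq_iff by simp
    thus "i = j" using N1_pos by simp
  qed
  have "0 \<notin> (\<lambda>k. \<alpha> ^ (N1 * k)) ` {..<q-1}" using alpha_nz by auto
  hence "card K = Suc (card ((\<lambda>k. \<alpha> ^ (N1 * k)) ` {..<q-1}))"
    by (simp add: K_char)
  also have "\<dots> = q" using card_image[OF inj] q_ge3 by simp
  finally show ?thesis .
qed

lemma finite_K[simp]: "finite K" by simp

definition cn :: 'a where "cn = \<alpha> ^ N1"

lemma cn_K: "cn \<in> K" unfolding cn_def using K_char q_ge3 by (auto intro!: image_eqI[of _ _ 1])

lemma cn_nz: "cn \<noteq> 0" unfolding cn_def using alpha_nz by simp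

lemma even_pow_square: "even k \<Longrightarrow> \<alpha> ^ k = (\<alpha> ^ (k div 2))^2"
  by (simp add: power_mult[symmetric])

lemma odd_pow_nonsquare:
  assumes "odd k" shows "\<alpha> ^ k \<noteq> z ^ 2"
proof
  assume eq: "\<alpha> ^ k = z ^ 2"
  hence "z \<noteq> 0" using alpha_nz by auto
  then obtain j where "z = \<alpha> ^ j" using gen by blast
  hence "\<alpha> ^ k = \<alpha> ^ (2 * j)" using eq by (simp add: power_mult[symmetric] mult.commute)
  hence "k mod Nm = (2 * j) mod Nm" using alpha_pow_eq_iff by blast
  hence "k mod Nm mod 2 = (2*j) mod Nm mod 2" by simp
  hence "k mod 2 = (2*j) mod 2" by (simp only: mod_mod_cancel[OF Nm_even])
  thus False using assms by (simp add: odd_iff_mod_2_eq_one)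
qed

end

lemma sum_pow_roots_bound:
  fixes f :: "nat \<Rightarrow> nat"
  assumes "n > 0" "strict_mono f"
  shows "card {x::'a::{comm_ring_1,ring_no_zero_divisors}. (\<Sum>i<n. x ^ f i) = 0} \<le> f (n - 1)"
proof -
  define P :: "'a poly" where "P = (\<Sum>i<n. monom 1 (f i))"
  have ev: "poly P x = (\<Sum>i<n. x ^ f i)" for x by (simp add: P_def poly_sum poly_monom)
  have inj: "inj f" using assms(2) by (rule strict_mono_imp_inj_on)
  have "coeff P (f (n - 1)) = (\<Sum>i<n. if i = n - 1 then 1 else 0)"
    unfolding P_def coeff_sum coeff_monom using inj by (intro sum.cong) (auto dest: injD)
  also have "\<dots> = 1" using assms(1) by simp
  finally have "P \<noteq> 0" by auto
  moreover have "degree P \<le> f (n - 1)"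
    unfolding P_def
  proof (rule degree_sum_le)
    fix i assume "i \<in> {..<n}"
    hence "f i \<le> f (n - 1)" using assms(2) by (simp add: strict_mono_less_eq)
    thus "degree (monom (1::'a) (f i)) \<le> f (n - 1)" using degree_monom_le order_trans by blast
  qed simp
  ultimately have "card {x. poly P x = 0} \<le> f (n - 1)"
    using card_poly_roots_bound[of P] by linarith
  thus ?thesis by (simp add: ev)
qed

context ctx
begin



lemma cn_nonsq: "cn \<noteq> z ^ 2"
  unfolding cn_def by (rule odd_pow_nonsquare[OF N1_odd])

lemma card_sq_eq: assumes "z \<noteq> (0::'a)" shows "card {x. x ^ 2 = z ^ 2} = 2"
proof -
  have "{x. x ^ 2 = z ^ 2} = {z, -z}" by (auto simp: power2_eq_iff)
  moreover have "z \<noteq> -z"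
  proof
    assume "z = -z"
    hence "2 * z = 0" by (metis add.right_inverse mult_2)
    thus False using assms two_nz by simp
  qed
  ultimately show ?thesis by simp
qed

lemma sq_count:
  assumes "y \<noteq> (0::'a)"
  shows "card {x. x ^ 2 = y} + card {x. cn * x ^ 2 = y} = 2"
proof -
  obtain k where k: "y = \<alpha> ^ k" using gen assms by blast
  show ?thesis
  proof (cases "even k")
    case True
    define z where "z = \<alpha> ^ (k div 2)"
    have yz: "y = z ^ 2" using True k by (simp add: z_def power_mult[symmetric])
    have z0: "z \<noteq> 0" using alpha_nz z_def by simp
    have "{x. cn * x ^ 2 = y} = {}"
    proof (rule ccontr)
      assume "{x. cn * x ^ 2 = y} \<noteq> {}"
      then obtain x where x: "cn * x ^ 2 = z ^ 2" using yz by auto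
      hence "x \<noteq> 0" using z0 by auto
      hence "cn = (z / x) ^ 2" using x by (simp add: power_divide field_simps)
      thus False using cn_nonsq by blast
    qed
    thus ?thesis using card_sq_eq[OF z0] yz by simp
  next
    case False
    have "\<forall>x. x ^ 2 \<noteq> y" using odd_pow_nonsquare[OF False] k by metis
    hence e1: "{x. x ^ 2 = y} = {}" by simp
    define w where "w = \<alpha> ^ ((k + Nm - N1) div 2)"
    have "N1 * 1 \<le> N1 * (q - 1)" using q_ge3 by (intro mult_le_mono2) auto
    hence N1le: "N1 \<le> Nm" using N1_mult by simp
    have ev: "even (k + Nm - N1)" using False Nm_even N1_odd N1le by simp
    have "cn * w ^ 2 = \<alpha> ^ (N1 + (k + Nm - N1))"
      using ev by (simp add: w_def cn_def power_mult[symmetric] power_add)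
    also have "N1 + (k + Nm - N1) = k + Nm" using N1le by simp
    also have "\<alpha> ^ (k + Nm) = y" using k by (simp add: power_add alpha_Nm)
    finally have yw: "y = cn * w ^ 2" by simp
    have w0: "w \<noteq> 0" using alpha_nz w_def by simp
    have "{x. cn * x ^ 2 = y} = {x. x ^ 2 = w ^ 2}" using yw cn_nz by auto
    thus ?thesis using e1 card_sq_eq[OF w0] by simp
  qed
qed

lemma card_preimage_sum:
  fixes f :: "'a \<Rightarrow> 'a"
  shows "card {x::'a. f x \<in> S} = (\<Sum>y\<in>S. card {x. f x = y})"
proof -
  have "{x::'a. f x \<in> S} = (\<Union>y\<in>S. {x. f x = y})" by auto
  moreover have "card (\<Union>y\<in>S. {x::'a. f x = y}) = (\<Sum>y\<in>S. card {x. f x = y})"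
    by (rule card_UN_disjoint) auto
  ultimately show ?thesis by simp
qed

lemma sq_preimage_count:
  assumes "0 \<in> S"
  shows "card {x::'a. x ^ 2 \<in> S} + card {x. cn * x ^ 2 \<in> S} = 2 * card S"
proof -
  have "card {x::'a. x ^ 2 \<in> S} + card {x. cn * x ^ 2 \<in> S}
      = (\<Sum>y\<in>S. card {x. x ^ 2 = y} + card {x. cn * x ^ 2 = y})"
    by (simp add: card_preimage_sum sum.distrib)
  also have "\<dots> = (\<Sum>y\<in>S. 2)"
  proof (rule sum.cong)
    fix y assume "y \<in> S"
    show "card {x. x ^ 2 = y} + card {x. cn * x ^ 2 = y} = 2"
    proof (cases "y = 0")
      case True
      have "{x::'a. x ^ 2 = y} = {0}" "{x. cn * x ^ 2 = y} = {0}" using True cn_nz by auto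
      thus ?thesis by simp
    qed (rule sq_count)
  qed simp
  finally show ?thesis by simp
qed



lemma of_nat_pow_p: "(of_nat k :: 'a) ^ p = of_nat k"
proof (induct k)
  case 0 thus ?case using p_ge3 by (simp add: power_0_left)
next
  case (Suc k)
  have "(of_nat (Suc k) :: 'a) ^ p = (of_nat k + 1) ^ p" by (simp only: of_nat_Suc add.commute)
  also have "\<dots> = of_nat k ^ p + 1 ^ p"
    by (rule freshmans_dream[OF CHAR_prime]) (simp add: CHAR_eq)
  finally show ?case using Suc by (simp add: add.commute)
qed

lemma of_nat_mod_p: "(of_nat k :: 'a) = of_nat (k mod p)"
proof -
  have "(of_nat k :: 'a) = of_nat (p * (k div p) + k mod p)" by simp
  also have "\<dots> = of_nat (k mod p)" by (simp only: of_nat_add of_nat_mult char_p mult_zero_left add_0)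
  finally show ?thesis .
qed

lemma of_nat_inj_p: "inj_on (of_nat :: nat \<Rightarrow> 'a) {..<p}"
proof (rule inj_onI)
  have *: "i = j" if "i < p" "j < p" "i \<le> j" "(of_nat i :: 'a) = of_nat j" for i j
  proof (rule ccontr)
    assume "i \<noteq> j"
    have "(of_nat (j - i) :: 'a) = 0" using that by (simp add: of_nat_diff)
    hence "p dvd (j - i)" using CHAR_eq of_nat_eq_0_iff_char_dvd by metis
    moreover have "0 < j - i" "j - i < p" using that \<open>i \<noteq> j\<close> by auto
    ultimately show False by (auto dest: dvd_imp_le)
  qed
  fix i j assume "i \<in> {..<p}" "j \<in> {..<p}" "(of_nat i :: 'a) = of_nat j"
  thus "i = j" using *[of i j] *[of j i] by (cases "i \<le> j") auto
qed

lemma of_nat_eq_mod: "(of_nat i :: 'a) = of_nat j \<Longrightarrow> i mod p = j mod p"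
  using of_nat_mod_p[of i] of_nat_mod_p[of j] of_nat_inj_p p_ge3
  by (auto dest: inj_onD)

lemma Fp_char: "{y::'a. y ^ p = y} = of_nat ` {..<p}"
proof -
  have sub: "of_nat ` {..<p} \<subseteq> {y::'a. y ^ p = y}" using of_nat_pow_p by auto
  have "card {y::'a. y ^ p = y} \<le> p"
  proof -
    define P :: "'a poly" where "P = monom 1 p - monom 1 1"
    have ev: "poly P x = x ^ p - x" for x by (simp add: P_def poly_monom)
    have "coeff P p = 1" using p_ge3 by (simp add: P_def coeff_monom)
    hence "P \<noteq> 0" by auto
    moreover have "degree P \<le> p"
      unfolding P_def using p_ge3
      by (intro degree_diff_le) (auto simp: degree_monom_le degree_monom_eq)
    ultimately have "card {x. poly P x = 0} \<le> p" using card_poly_roots_bound[of P] by linarith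
    thus ?thesis by (simp add: ev)
  qed
  moreover have "card (of_nat ` {..<p} :: 'a set) = p" using card_image[OF of_nat_inj_p] by simp
  ultimately have "of_nat ` {..<p} = {y::'a. y ^ p = y}" using sub by (intro card_seteq) auto
  thus ?thesis by simp
qed

definition Tp :: "'a \<Rightarrow> 'a" where "Tp u = (\<Sum>j<e. u ^ (p ^ j))"

lemma Tp_add: "Tp (u + v) = Tp u + Tp v"
  unfolding Tp_def
  by (simp add: sum.distrib freshmans_dream'[OF CHAR_prime, where n="_"] CHAR_eq)

lemma Tp_Fp: assumes "u \<in> K" shows "Tp u ^ p = Tp u"
proof -
  let ?f = "\<lambda>j. u ^ (p ^ j)"
  have "Tp u ^ p = (\<Sum>j<e. ?f j ^ p)"
    unfolding Tp_def by (rule freshmans_dream_sum'[OF CHAR_prime, where n=1]) (simp add: CHAR_eq)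
  also have "\<dots> = (\<Sum>j<e. ?f (Suc j))"
    by (simp add: CHAR_eq power_mult[symmetric] mult.commute)
  also have "\<dots> = (\<Sum>j<e. ?f j)"
  proof -
    have "(\<Sum>j<Suc e. ?f j) = ?f 0 + (\<Sum>j<e. ?f (Suc j))"
      by (rule sum.lessThan_Suc_shift)
    moreover have "(\<Sum>j<Suc e. ?f j) = (\<Sum>j<e. ?f j) + ?f e" by simp
    moreover have "?f e = ?f 0"
    proof -
      have "u ^ q = u" using assms K_iff by blast
      thus ?thesis using q_def by simp
    qed
    ultimately show ?thesis by (simp add: add.commute)
  qed
  finally show ?thesis by (simp add: Tp_def)
qed

lemma Tp_nontriv: "\<exists>u\<in>K. Tp u \<noteq> 0"
proof (rule ccontr)
  assume "\<not> ?thesis"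
  hence "K \<subseteq> {x. (\<Sum>j<e. x ^ (p ^ j)) = 0}" by (auto simp: Tp_def)
  hence "card K \<le> card {x::'a. (\<Sum>j<e. x ^ (p ^ j)) = 0}" by (intro card_mono) auto
  also have "\<dots> \<le> p ^ (e - 1)"
    using sum_pow_roots_bound[of e "\<lambda>j. p ^ j"] e_ge p_ge3
    by (auto simp: strict_mono_def)
  also have "\<dots> < p ^ e" using e_ge p_ge3 by (intro power_strict_increasing) auto
  finally show False using card_K q_def by simp
qed

definition ind :: "'a \<Rightarrow> nat" where "ind y = (SOME k. k < p \<and> of_nat k = y)"

lemma ind: assumes "y ^ p = y" shows "ind y < p" "of_nat (ind y) = y"
proof -
  have "y \<in> of_nat ` {..<p}" using assms Fp_char by blast
  hence "\<exists>k. k < p \<and> of_nat k = y" by auto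
  hence "ind y < p \<and> of_nat (ind y) = y" unfolding ind_def by (rule someI_ex)
  thus "ind y < p" "of_nat (ind y) = y" by auto
qed

definition \<omega> :: complex where "\<omega> = cis (2 * pi / p)"

lemma omega_p: "\<omega> ^ p = 1"
  using p_ge3 by (simp add: \<omega>_def DeMoivre)

lemma omega_pow_mod: "\<omega> ^ k = \<omega> ^ (k mod p)"
proof -
  have "\<omega> ^ k = \<omega> ^ (p * (k div p) + k mod p)" by (simp only: mult_div_mod_eq)
  also have "\<dots> = \<omega> ^ (k mod p)" by (simp only: power_add power_mult omega_p power_one mult_1)
  finally show ?thesis .
qed

lemma omega_pow_ne1: assumes "0 < k" "k < p" shows "\<omega> ^ k \<noteq> 1"
proof
  assume "\<omega> ^ k = 1"
  hence "cis (real k * (2 * pi / p)) = 1" by (simp add: \<omega>_def DeMoivre)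
  hence "cos (real k * (2 * pi / p)) = 1" by (metis Re_complex_of_real cis.sel(1) one_complex.sel(1))
  then obtain n :: int where n: "real k * (2 * pi / p) = real_of_int n * 2 * pi" using cos_one_2pi_int by blast
  hence "real k = n * p" using p_ge3 by (simp add: field_simps)
  hence "int k = n * int p" by (metis of_int_eq_iff of_int_mult of_int_of_nat_eq)
  hence "int p dvd int k" by simp
  hence "p dvd k" by simp
  thus False using assms by (auto dest: dvd_imp_le)
qed

lemma norm_omega_pow: "norm (\<omega> ^ k) = 1"
  by (simp add: \<omega>_def norm_power)

definition \<chi> :: "'a \<Rightarrow> complex" where "\<chi> u = \<omega> ^ ind (Tp u)"

lemma chi_add: assumes "u \<in> K" "v \<in> K" shows "\<chi> (u + v) = \<chi> u * \<chi> v"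
proof -
  have a: "Tp u ^ p = Tp u" "Tp v ^ p = Tp v" "Tp (u+v) ^ p = Tp (u+v)"
    using assms Tp_Fp by auto
  have "(of_nat (ind (Tp u) + ind (Tp v)) :: 'a) = of_nat (ind (Tp (u + v)))"
    using ind(2)[OF a(1)] ind(2)[OF a(2)] ind(2)[OF a(3)] by (simp add: Tp_add)
  hence "(ind (Tp u) + ind (Tp v)) mod p = ind (Tp (u + v)) mod p" by (rule of_nat_eq_mod)
  hence "\<omega> ^ (ind (Tp u) + ind (Tp v)) = \<omega> ^ ind (Tp (u + v))"
    by (metis omega_pow_mod)
  thus ?thesis by (simp add: \<chi>_def power_add)
qed

lemma norm_chi[simp]: "norm (\<chi> u) = 1" by (simp add: \<chi>_def norm_omega_pow)

lemma chi_0[simp]: "\<chi> 0 = 1"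
proof -
  have "\<chi> 0 = \<chi> 0 * \<chi> 0" using chi_add[of 0 0] by simp
  moreover have "\<chi> 0 \<noteq> 0" using norm_chi[of 0] by (metis norm_zero zero_neq_one)
  ultimately show ?thesis by simp
qed

lemma chi_nontriv: "\<exists>u\<in>K. \<chi> u \<noteq> 1"
proof -
  obtain u where u: "u \<in> K" "Tp u \<noteq> 0" using Tp_nontriv by blast
  have a: "Tp u ^ p = Tp u" using u Tp_Fp by auto
  have "ind (Tp u) \<noteq> 0" using ind(2)[OF a] u(2) by (metis of_nat_0)
  hence "\<omega> ^ ind (Tp u) \<noteq> 1" using ind(1)[OF a] omega_pow_ne1[of "ind (Tp u)"] by simp
  hence "\<chi> u \<noteq> 1" by (simp add: \<chi>_def)
  thus ?thesis using u by blast
qed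

lemma chi_neg: assumes "u \<in> K" shows "\<chi> (- u) = cnj (\<chi> u)"
proof -
  have "\<chi> (-u) * \<chi> u = 1" using chi_add[of "-u" u] assms by auto
  moreover have "cnj (\<chi> u) * \<chi> u = 1"
    using norm_chi[of u] by (metis complex_norm_square mult.commute of_real_1 power_one)
  ultimately show ?thesis using norm_chi[of u]
    by (metis mult_cancel_right norm_zero zero_neq_one)
qed

lemma chi_orth: assumes "t \<in> K" shows "(\<Sum>u\<in>K. \<chi> (u * t)) = (if t = 0 then of_nat q else 0)"
proof (cases "t = 0")
  case True thus ?thesis by (simp add: card_K)
next
  case False
  obtain u0 where u0: "u0 \<in> K" "\<chi> u0 \<noteq> 1" using chi_nontriv by blast
  have "(\<Sum>u\<in>K. \<chi> (u * t)) = (\<Sum>u\<in>K. \<chi> u)"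
    by (rule sum.reindex_bij_witness[of _ "\<lambda>u. u / t" "\<lambda>u. u * t"]) (use False assms in auto)
  also have "(\<Sum>u\<in>K. \<chi> u) = (\<Sum>u\<in>K. \<chi> (u + u0))"
    by (rule sum.reindex_bij_witness[of _ "\<lambda>u. u + u0" "\<lambda>u. u - u0"]) (use u0 in auto)
  also have "\<dots> = (\<Sum>u\<in>K. \<chi> u0 * \<chi> u)"
    by (intro sum.cong refl) (simp add: chi_add u0(1) mult.commute)
  also have "\<dots> = \<chi> u0 * (\<Sum>u\<in>K. \<chi> u)"
    by (simp add: sum_distrib_left)
  finally have "(\<Sum>u\<in>K. \<chi> (u * t)) = \<chi> u0 * (\<Sum>u\<in>K. \<chi> u)"
    "(\<Sum>u\<in>K. \<chi> u) = \<chi> u0 * (\<Sum>u\<in>K. \<chi> u)" by (auto simp: \<open>(\<Sum>u\<in>K. \<chi> (u * t)) = (\<Sum>u\<in>K. \<chi> u)\<close>)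
  hence "(\<Sum>u\<in>K. \<chi> u) = 0" using u0(2) by (metis mult_cancel_right2)
  thus ?thesis using False \<open>(\<Sum>u\<in>K. \<chi> (u * t)) = (\<Sum>u\<in>K. \<chi> u)\<close> by simp
qed

end

lemma sum_if_const:
  "finite A \<Longrightarrow> (\<Sum>x\<in>A. if P x then (c::complex) else 0) = c * of_nat (card {x\<in>A. P x})"
  by (simp add: sum.If_cases Int_def)

lemma gauss_abs:
  fixes \<phi> :: "'a::field \<Rightarrow> complex" and S :: "'a set"
  assumes fin: "finite S"
    and cl: "\<And>x y. x \<in> S \<Longrightarrow> y \<in> S \<Longrightarrow> x + y \<in> S \<and> x - y \<in> S \<and> x * y \<in> S"
    and two: "2 \<in> S" "(2::'a) \<noteq> 0"
    and hom: "\<And>x y. x \<in> S \<Longrightarrow> y \<in> S \<Longrightarrow> \<phi> (x + y) = \<phi> x * \<phi> y"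
    and negc: "\<And>x. x \<in> S \<Longrightarrow> \<phi> (- x) = cnj (\<phi> x)"
    and orth: "\<And>c. c \<in> S \<Longrightarrow> (\<Sum>w\<in>S. \<phi> (c * w)) = (if c = 0 then of_nat (card S) else 0)"
    and A: "A \<in> S" "A \<noteq> 0" and B: "B \<in> S"
  shows "norm (\<Sum>v\<in>S. \<phi> (A * v^2 + B * v)) ^ 2 = card S"
proof -
  have zS: "0 \<in> S" using cl[OF A(1) A(1)] by simp
  have negS: "- x \<in> S" if "x \<in> S" for x using cl[OF zS that] by simp
  have powS: "x ^ 2 \<in> S" if "x \<in> S" for x using cl[OF that that] by (simp add: power2_eq_square)
  have fS: "A * x^2 + B * x \<in> S" if "x \<in> S" for x
  proof -
    have "A * x^2 \<in> S" using cl[OF A(1) powS[OF that]] by blast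
    moreover have "B * x \<in> S" using cl[OF B that] by blast
    ultimately show ?thesis using cl by blast
  qed
  have mS: "2 * A * h \<in> S" if "h \<in> S" for h
  proof -
    have "2 * A \<in> S" using cl[OF two(1) A(1)] by blast
    thus ?thesis using cl[OF _ that] by blast
  qed
  have cS: "card S > 0" using zS fin card_gt_0_iff by blast
  have phi0: "\<phi> 0 = 1"
  proof -
    have "(\<Sum>w\<in>S. \<phi> (0 * w)) = of_nat (card S)" using orth[OF zS] by simp
    hence "of_nat (card S) * \<phi> 0 = of_nat (card S)" by (simp add: mult.commute)
    thus ?thesis using cS by simp
  qed
  let ?f = "\<lambda>v. A * v^2 + B * v"
  let ?g = "\<Sum>v\<in>S. \<phi> (?f v)"
  have "?g * cnj ?g = (\<Sum>w\<in>S. \<Sum>v\<in>S. \<phi> (?f v) * cnj (\<phi> (?f w)))"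
    by (simp only: cnj_sum sum_distrib_left sum_distrib_right)
  also have "\<dots> = (\<Sum>w\<in>S. \<Sum>v\<in>S. \<phi> (?f v - ?f w))"
  proof (intro sum.cong refl)
    fix w v assume "w \<in> S" "v \<in> S"
    have "\<phi> (?f v - ?f w) = \<phi> (?f v + (- ?f w))" by (simp only: diff_conv_add_uminus)
    also have "\<dots> = \<phi> (?f v) * \<phi> (- ?f w)"
      using hom[OF fS[of v] negS[OF fS[of w]]] \<open>w \<in> S\<close> \<open>v \<in> S\<close> by blast
    also have "\<dots> = \<phi> (?f v) * cnj (\<phi> (?f w))" using negc[OF fS[of w]] \<open>w \<in> S\<close> by simp
    finally show "\<phi> (?f v) * cnj (\<phi> (?f w)) = \<phi> (?f v - ?f w)" by simp
  qed
  also have "\<dots> = (\<Sum>w\<in>S. \<Sum>h\<in>S. \<phi> (?f (w + h) - ?f w))"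
  proof (rule sum.cong[OF refl])
    fix w assume w: "w \<in> S"
    show "(\<Sum>v\<in>S. \<phi> (?f v - ?f w)) = (\<Sum>h\<in>S. \<phi> (?f (w + h) - ?f w))"
      by (rule sum.reindex_bij_witness[of _ "\<lambda>h. w + h" "\<lambda>v. v - w"]) (use w cl in auto)
  qed
  also have "\<dots> = (\<Sum>w\<in>S. \<Sum>h\<in>S. \<phi> (?f h) * \<phi> ((2 * A * h) * w))"
  proof (intro sum.cong refl)
    fix w h assume w: "w \<in> S" and h: "h \<in> S"
    have "?f (w + h) - ?f w = ?f h + (2 * A * h) * w" by (simp add: algebra_simps power2_eq_square)
    moreover have "2 * A * h * w \<in> S" using cl[OF mS[OF h] w] by blast
    ultimately show "\<phi> (?f (w + h) - ?f w) = \<phi> (?f h) * \<phi> ((2 * A * h) * w)"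
      using hom fS[OF h] by metis
  qed
  also have "\<dots> = (\<Sum>h\<in>S. \<phi> (?f h) * (\<Sum>w\<in>S. \<phi> ((2 * A * h) * w)))"
    by (subst sum.swap) (simp only: sum_distrib_left)
  also have "\<dots> = (\<Sum>h\<in>S. if h = 0 then of_nat (card S) else 0)"
  proof (intro sum.cong refl)
    fix h assume h: "h \<in> S"
    have "2 * A * h \<in> S" using mS[OF h] .
    thus "\<phi> (?f h) * (\<Sum>w\<in>S. \<phi> ((2 * A * h) * w)) = (if h = 0 then of_nat (card S) else 0)"
      using orth[of "2 * A * h"] two A phi0 by auto
  qed
  also have "\<dots> = of_nat (card S)" using zS fin by (simp add: sum.delta)
  finally have eq: "?g * cnj ?g = of_nat (card S)" .
  have "complex_of_real (norm ?g ^ 2) = ?g * cnj ?g" by (rule complex_norm_square)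
  also have "\<dots> = of_nat (card S)" by (rule eq)
  finally have "complex_of_real (norm ?g ^ 2) = of_nat (card S)" .
  hence "complex_of_real (norm ?g ^ 2) = complex_of_real (real (card S))" by simp
  thus ?thesis using of_real_eq_iff by blast
qed

context ctx
begin

definition \<psi> :: "'a \<Rightarrow> complex" where "\<psi> x = \<chi> (Tr x)"

lemma psi_add: "\<psi> (x + y) = \<psi> x * \<psi> y"
  by (simp add: \<psi>_def Tr_add chi_add Tr_in_K)

lemma psi_neg: "\<psi> (- x) = cnj (\<psi> x)"
  by (simp add: \<psi>_def Tr_minus chi_neg Tr_in_K)

lemma norm_psi[simp]: "norm (\<psi> x) = 1" by (simp add: \<psi>_def)

lemma psi_0[simp]: "\<psi> 0 = 1" by (simp add: \<psi>_def)

lemma psi_scale: "u \<in> K \<Longrightarrow> \<psi> (u * z) = \<chi> (u * Tr z)"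
  by (simp add: \<psi>_def Tr_scale)

lemma psi_orthK: "(\<Sum>u\<in>K. \<psi> (u * z)) = (if Tr z = 0 then of_nat q else 0)"
  using chi_orth[OF Tr_in_K[of z]] by (simp add: psi_scale)

lemma Tr_nontriv: "\<exists>x. Tr x \<noteq> 0"
proof (rule ccontr)
  assume "\<not> ?thesis"
  hence "(UNIV::'a set) \<subseteq> {x. (\<Sum>i<m. x ^ (q ^ i)) = 0}" by (auto simp: trace_def)
  hence "card (UNIV::'a set) \<le> card {x::'a. (\<Sum>i<m. x ^ (q ^ i)) = 0}" by (intro card_mono) auto
  also have "\<dots> \<le> q ^ (m - 1)"
    using sum_pow_roots_bound[of m "\<lambda>i. q ^ i"] m_ge q_ge3
    by (auto simp: strict_mono_def)
  also have "\<dots> < q ^ m" using m_ge q_ge3 by (intro power_strict_increasing) auto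
  finally show False using card_F by simp
qed

lemma psi_nontriv: "\<exists>x0. \<psi> x0 \<noteq> 1"
proof -
  obtain u0 where u0: "u0 \<in> K" "\<chi> u0 \<noteq> 1" using chi_nontriv by blast
  obtain x1 where x1: "Tr x1 \<noteq> 0" using Tr_nontriv by blast
  have "\<psi> ((u0 / Tr x1) * x1) = \<chi> u0"
    using psi_scale[of "u0 / Tr x1" x1] u0 x1 Tr_in_K[of x1] by auto
  thus ?thesis using u0 by metis
qed

lemma psi_sum: "(\<Sum>x\<in>UNIV. \<psi> (w * x)) = (if w = 0 then of_nat (q^m) else 0)"
proof (cases "w = 0")
  case True thus ?thesis by (simp add: card_F)
next
  case False
  obtain x0 where x0: "\<psi> x0 \<noteq> 1" using psi_nontriv by blast
  have e1: "(\<Sum>x\<in>UNIV. \<psi> (w * x)) = (\<Sum>x\<in>UNIV. \<psi> x)"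
    by (rule sum.reindex_bij_witness[of _ "\<lambda>u. u / w" "\<lambda>u. w * u"]) (use False in auto)
  have "(\<Sum>x\<in>UNIV. \<psi> x) = (\<Sum>x\<in>UNIV. \<psi> (x + x0))"
    by (rule sum.reindex_bij_witness[of _ "\<lambda>u. u + x0" "\<lambda>u. u - x0"]) auto
  also have "\<dots> = \<psi> x0 * (\<Sum>x\<in>UNIV. \<psi> x)"
    by (simp add: psi_add sum_distrib_left mult.commute)
  finally have "(\<Sum>x\<in>UNIV. \<psi> x) = 0" using x0 by (metis mult_cancel_right2)
  thus ?thesis using e1 False by simp
qed

lemma card_H: "card {x::'a. Tr x = 0} = q ^ (m - 1)"
proof -
  have "(\<Sum>x\<in>UNIV. \<Sum>u\<in>K. \<psi> (u * x)) = (\<Sum>u\<in>K. \<Sum>x\<in>UNIV. \<psi> (u * x))"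
    by (rule sum.swap)
  also have "\<dots> = (\<Sum>u\<in>K. if u = 0 then of_nat (q^m) else 0)" by (simp add: psi_sum)
  also have "\<dots> = of_nat (q^m)" by (simp add: sum.delta)
  finally have "(\<Sum>x\<in>UNIV. if Tr x = 0 then (of_nat q::complex) else 0) = of_nat (q^m)"
    by (simp add: psi_orthK)
  hence "of_nat q * of_nat (card {x::'a. Tr x = 0}) = (of_nat (q^m) :: complex)"
    by (simp add: sum_if_const)
  hence "q * card {x::'a. Tr x = 0} = q ^ m" by (metis of_nat_eq_iff of_nat_mult)
  moreover have "q ^ m = q * q ^ (m - 1)" using m_ge by (simp flip: power_Suc)
  ultimately show ?thesis using q_ge3 by simp
qed

lemma card_D: "card {x::'a. Tr (x^2) = 0} = q ^ (m - 1)"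
proof -
  have "card {x::'a. x ^ 2 \<in> {y. Tr y = 0}} + card {x. cn * x ^ 2 \<in> {y. Tr y = 0}} = 2 * card {y::'a. Tr y = 0}"
    by (rule sq_preimage_count) simp
  moreover have "{x. cn * x ^ 2 \<in> {y. Tr y = 0}} = {x::'a. Tr (x^2) = 0}"
    using cn_K cn_nz by (simp add: Tr_scale)
  ultimately show ?thesis using card_H by simp
qed

definition Gs :: "'a \<Rightarrow> complex" where "Gs u = (\<Sum>x\<in>UNIV. \<psi> (u * x^2))"

lemma Gs_abs: assumes "u \<noteq> 0" shows "norm (Gs u) ^ 2 = q ^ m"
proof -
  have "norm (\<Sum>v\<in>UNIV. \<psi> (u * v^2 + 0 * v)) ^ 2 = card (UNIV::'a set)"
    by (rule gauss_abs) (use assms two_nz in \<open>auto simp: psi_add psi_neg psi_sum card_F\<close>)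
  thus ?thesis by (simp add: Gs_def card_F)
qed

lemma chi_orth': "t \<in> K \<Longrightarrow> (\<Sum>u\<in>K. \<chi> (t * u)) = (if t = 0 then of_nat q else 0)"
  using chi_orth[of t] by (simp add: mult.commute)

definition gs :: "'a \<Rightarrow> 'a \<Rightarrow> complex" where "gs A B = (\<Sum>v\<in>K. \<chi> (A * v^2 + B * v))"

lemma gs_abs: assumes "A \<in> K" "A \<noteq> 0" "B \<in> K" shows "norm (gs A B) ^ 2 = q"
proof -
  have "norm (gs A B) ^ 2 = card K"
    unfolding gs_def
    by (rule gauss_abs) (use assms two_nz in \<open>auto simp: chi_add chi_neg chi_orth' card_K\<close>)
  thus ?thesis by (simp add: card_K)
qed

end

context ctx
begin

definition Ncnt :: "'a \<Rightarrow> 'a \<Rightarrow> nat" where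
  "Ncnt b t = card {x::'a. Tr (x^2) = 0 \<and> Tr (b * x) = t}"

definition Au :: "'a \<Rightarrow> 'a \<Rightarrow> 'a" where "Au b u = - (Tr (b^2) / (4 * u))"

lemma four_nz: "(4::'a) \<noteq> 0"
proof -
  have "(4::'a) = 2 * 2" by simp
  thus ?thesis using two_nz by (metis no_zero_divisors)
qed

lemma sixteen_nz: "(16::'a) \<noteq> 0"
proof -
  have "(16::'a) = 4 * 4" by simp
  thus ?thesis using four_nz by (metis no_zero_divisors)
qed

lemma eight_nz: "(8::'a) \<noteq> 0"
proof -
  have "(8::'a) = 2 * 4" by simp
  thus ?thesis using four_nz two_nz by (metis no_zero_divisors)
qed

lemma K_4: "(4::'a) \<in> K"
proof -
  have "(4::'a) = 2 * 2" by simp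
  thus ?thesis using K_mult[OF K_2 K_2] by simp
qed

lemma Au_K: "u \<in> K \<Longrightarrow> Au b u \<in> K"
  unfolding Au_def using K_4 Tr_in_K by (intro K_uminus K_divide K_mult) auto

lemma inner_u0: "(\<Sum>x\<in>UNIV. \<psi> (0 * x^2 + (v * b) * x)) = (if v * b = 0 then of_nat (q^m) else 0)"
  using psi_sum[of "v * b"] by simp

lemma inner_u:
  assumes u: "u \<in> K" "u \<noteq> 0" and v: "v \<in> K"
  shows "(\<Sum>x\<in>UNIV. \<psi> (u * x^2 + (v * b) * x)) = \<chi> (Au b u * v^2) * Gs u"
proof -
  define c where "c = v * b / (2 * u)"
  have id: "u * x^2 + (v * b) * x = u * (x + c)^2 + (- ((v * b)^2 / (4 * u)))" for x
    using u two_nz four_nz eight_nz sixteen_nz unfolding c_def by (simp add: field_simps power2_eq_square)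
  have "(\<Sum>x\<in>UNIV. \<psi> (u * x^2 + (v * b) * x)) = (\<Sum>x\<in>UNIV. \<psi> (u * (x + c)^2) * \<psi> (- ((v * b)^2 / (4 * u))))"
    by (simp only: id psi_add)
  also have "\<dots> = (\<Sum>x\<in>UNIV. \<psi> (u * x^2)) * \<psi> (- ((v * b)^2 / (4 * u)))"
  proof -
    have "(\<Sum>x\<in>UNIV. \<psi> (u * (x + c)^2)) = (\<Sum>x\<in>UNIV. \<psi> (u * x^2))"
      by (rule sum.reindex_bij_witness[of _ "\<lambda>x. x - c" "\<lambda>x. x + c"]) auto
    thus ?thesis by (metis sum_distrib_right)
  qed
  also have "\<psi> (- ((v * b)^2 / (4 * u))) = \<chi> (Au b u * v^2)"
  proof -
    have k: "- (v^2 / (4 * u)) \<in> K" using u v K_4 by (intro K_uminus K_divide K_mult K_pow) auto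
    have "- ((v * b)^2 / (4 * u)) = (- (v^2 / (4 * u))) * b^2" by (simp add: power_mult_distrib field_simps)
    hence "\<psi> (- ((v * b)^2 / (4 * u))) = \<psi> ((- (v^2 / (4 * u))) * b^2)" by (simp only:)
    also have "\<dots> = \<chi> ((- (v^2 / (4 * u))) * Tr (b^2))" by (rule psi_scale[OF k])
    also have "(- (v^2 / (4 * u))) * Tr (b^2) = Au b u * v^2" by (simp add: Au_def field_simps)
    finally show ?thesis .
  qed
  finally show ?thesis by (simp add: Gs_def mult.commute)
qed

lemma count_formula:
  assumes b: "b \<noteq> 0" and t: "t \<in> K"
  shows "of_nat (q^2 * Ncnt b t) = (of_nat (q^m) :: complex) + (\<Sum>u\<in>K-{0}. Gs u * gs (Au b u) (- t))"
proof -
  let ?P = "\<lambda>x. Tr (x^2) = 0 \<and> Tr (b * x) = t"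
  have step1: "(\<Sum>x\<in>UNIV. (\<Sum>u\<in>K. \<chi> (u * Tr (x^2))) * (\<Sum>v\<in>K. \<chi> (v * (Tr (b * x) - t))))
      = of_nat (q^2 * Ncnt b t)"
  proof -
    have "(\<Sum>x\<in>UNIV. (\<Sum>u\<in>K. \<chi> (u * Tr (x^2))) * (\<Sum>v\<in>K. \<chi> (v * (Tr (b * x) - t))))
        = (\<Sum>x\<in>UNIV. if ?P x then of_nat q * of_nat q else 0)"
    proof (rule sum.cong[OF refl])
      fix x
      have "Tr (b * x) - t \<in> K" using t Tr_in_K by auto
      thus "(\<Sum>u\<in>K. \<chi> (u * Tr (x^2))) * (\<Sum>v\<in>K. \<chi> (v * (Tr (b * x) - t)))
          = (if ?P x then of_nat q * of_nat q else 0)"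
        using chi_orth[OF Tr_in_K[of "x^2"]] chi_orth[of "Tr (b * x) - t"] by simp
    qed
    also have "\<dots> = of_nat q * of_nat q * of_nat (Ncnt b t)"
      by (simp add: sum_if_const Ncnt_def)
    finally show ?thesis by (simp add: power2_eq_square)
  qed
  have prod_eq: "\<chi> (u * Tr (x^2)) * \<chi> (v * (Tr (b * x) - t)) = \<chi> (- (v * t)) * \<psi> (u * x^2 + (v * b) * x)"
    if u: "u \<in> K" and v: "v \<in> K" for u v x
  proof -
    have k1: "u * Tr (x^2) \<in> K" "v * Tr (b * x) \<in> K" "- (v * t) \<in> K"
      using u v t Tr_in_K by auto
    have "\<chi> (u * Tr (x^2)) * \<chi> (v * (Tr (b * x) - t)) = \<chi> (u * Tr (x^2) + v * (Tr (b * x) - t))"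
    proof -
      have m1: "u * Tr (x^2) \<in> K" using u Tr_in_K by blast
      have m2: "v * (Tr (b * x) - t) \<in> K" using v t Tr_in_K by blast
      show ?thesis using chi_add[OF m1 m2] by simp
    qed
    also have "u * Tr (x^2) + v * (Tr (b * x) - t) = (u * Tr (x^2) + v * Tr (b * x)) + (- (v * t))"
      by (simp add: algebra_simps)
    also have "\<chi> \<dots> = \<chi> (u * Tr (x^2) + v * Tr (b * x)) * \<chi> (- (v * t))"
      using k1 by (intro chi_add) auto
    also have "u * Tr (x^2) + v * Tr (b * x) = Tr (u * x^2 + (v * b) * x)"
      using u v by (simp add: Tr_add Tr_scale mult.assoc)
    finally show ?thesis by (simp add: \<psi>_def mult.commute)
  qed
  have step2: "(\<Sum>x\<in>UNIV. (\<Sum>u\<in>K. \<chi> (u * Tr (x^2))) * (\<Sum>v\<in>K. \<chi> (v * (Tr (b * x) - t))))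
      = (\<Sum>u\<in>K. \<Sum>v\<in>K. \<chi> (- (v * t)) * (\<Sum>x\<in>UNIV. \<psi> (u * x^2 + (v * b) * x)))"
  proof -
    have "(\<Sum>x\<in>UNIV. (\<Sum>u\<in>K. \<chi> (u * Tr (x^2))) * (\<Sum>v\<in>K. \<chi> (v * (Tr (b * x) - t))))
        = (\<Sum>x\<in>UNIV. \<Sum>u\<in>K. \<Sum>v\<in>K. \<chi> (u * Tr (x^2)) * \<chi> (v * (Tr (b * x) - t)))"
      by (simp only: sum_product)
    also have "\<dots> = (\<Sum>x\<in>UNIV. \<Sum>u\<in>K. \<Sum>v\<in>K. \<chi> (- (v * t)) * \<psi> (u * x^2 + (v * b) * x))"
      by (intro sum.cong refl) (simp add: prod_eq)
    also have "\<dots> = (\<Sum>u\<in>K. \<Sum>x\<in>UNIV. \<Sum>v\<in>K. \<chi> (- (v * t)) * \<psi> (u * x^2 + (v * b) * x))"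
      by (rule sum.swap)
    also have "\<dots> = (\<Sum>u\<in>K. \<Sum>v\<in>K. \<Sum>x\<in>UNIV. \<chi> (- (v * t)) * \<psi> (u * x^2 + (v * b) * x))"
      by (rule sum.cong[OF refl]) (rule sum.swap)
    also have "\<dots> = (\<Sum>u\<in>K. \<Sum>v\<in>K. \<chi> (- (v * t)) * (\<Sum>x\<in>UNIV. \<psi> (u * x^2 + (v * b) * x)))"
      by (simp only: sum_distrib_left)
    finally show ?thesis .
  qed
  have t0: "(\<Sum>v\<in>K. \<chi> (- (v * t)) * (\<Sum>x\<in>UNIV. \<psi> (0 * x^2 + (v * b) * x))) = of_nat (q^m)"
  proof -
    have "(\<Sum>v\<in>K. \<chi> (- (v * t)) * (\<Sum>x\<in>UNIV. \<psi> (0 * x^2 + (v * b) * x)))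
        = (\<Sum>v\<in>K. if v = 0 then of_nat (q^m) else 0)"
      by (rule sum.cong[OF refl]) (simp only: inner_u0, use b in simp)
    also have "\<dots> = of_nat (q^m)" by (simp add: sum.delta)
    finally show ?thesis .
  qed
  have tu: "(\<Sum>v\<in>K. \<chi> (- (v * t)) * (\<Sum>x\<in>UNIV. \<psi> (u * x^2 + (v * b) * x))) = Gs u * gs (Au b u) (- t)"
    if u: "u \<in> K - {0}" for u
  proof -
    have "(\<Sum>v\<in>K. \<chi> (- (v * t)) * (\<Sum>x\<in>UNIV. \<psi> (u * x^2 + (v * b) * x)))
        = (\<Sum>v\<in>K. Gs u * \<chi> (Au b u * v^2 + (- t) * v))"
    proof (rule sum.cong[OF refl])
      fix v assume v: "v \<in> K"
      have "\<chi> (Au b u * v^2 + (- t) * v) = \<chi> (Au b u * v^2) * \<chi> (- (v * t))"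
        using Au_K[of u b] u v t by (subst chi_add) (auto simp: mult.commute)
      moreover have "(\<Sum>x\<in>UNIV. \<psi> (u * x^2 + (v * b) * x)) = \<chi> (Au b u * v^2) * Gs u"
        using inner_u[of u v b] u v by auto
      ultimately show "\<chi> (- (v * t)) * (\<Sum>x\<in>UNIV. \<psi> (u * x^2 + (v * b) * x)) = Gs u * \<chi> (Au b u * v^2 + (- t) * v)"
        by (simp only:) (simp add: mult_ac)
    qed
    thus ?thesis by (simp add: gs_def sum_distrib_left)
  qed
  have "of_nat (q^2 * Ncnt b t)
      = (\<Sum>u\<in>K. \<Sum>v\<in>K. \<chi> (- (v * t)) * (\<Sum>x\<in>UNIV. \<psi> (u * x^2 + (v * b) * x)))"
    using step1 step2 by simp
  also have "\<dots> = (\<Sum>v\<in>K. \<chi> (- (v * t)) * (\<Sum>x\<in>UNIV. \<psi> (0 * x^2 + (v * b) * x)))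
      + (\<Sum>u\<in>K-{0}. \<Sum>v\<in>K. \<chi> (- (v * t)) * (\<Sum>x\<in>UNIV. \<psi> (u * x^2 + (v * b) * x)))"
    by (rule sum.remove) auto
  also have "\<dots> = of_nat (q^m) + (\<Sum>u\<in>K-{0}. Gs u * gs (Au b u) (- t))"
    using t0 tu by simp
  finally show ?thesis .
qed

end

context ctx
begin

lemma Gs_0: "Gs 0 = of_nat (q^m)" by (simp add: Gs_def card_F)

lemma sum_Gs: "(\<Sum>u\<in>K-{0}. Gs u) = 0"
proof -
  have "(\<Sum>u\<in>K. Gs u) = (\<Sum>u\<in>K. \<Sum>x\<in>UNIV. \<psi> (u * x^2))" by (simp add: Gs_def)
  also have "\<dots> = (\<Sum>x\<in>UNIV. \<Sum>u\<in>K. \<psi> (u * x^2))" by (rule sum.swap)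
  also have "\<dots> = (\<Sum>x\<in>UNIV. if Tr (x^2) = 0 then of_nat q else 0)" by (simp only: psi_orthK)
  also have "\<dots> = of_nat q * of_nat (card {x::'a. Tr (x^2) = 0})" by (simp add: sum_if_const)
  also have "\<dots> = of_nat (q^m)"
  proof -
    have "q * q ^ (m - 1) = q ^ m" using m_ge by (simp flip: power_Suc)
    thus ?thesis using card_D by (metis of_nat_mult)
  qed
  finally have "(\<Sum>u\<in>K. Gs u) = of_nat (q^m)" .
  moreover have "(\<Sum>u\<in>K. Gs u) = Gs 0 + (\<Sum>u\<in>K-{0}. Gs u)" by (rule sum.remove) auto
  ultimately show ?thesis using Gs_0 by simp
qed

lemma half_exp: "q ^ ((m + 1) div 2) * q ^ ((m + 1) div 2) = q ^ (m + 1)"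
proof -
  have "(m + 1) div 2 + (m + 1) div 2 = m + 1" using m_odd by presburger
  thus ?thesis by (metis power_add)
qed

lemma err_bound:
  assumes t: "t \<in> K"
  shows "norm (\<Sum>u\<in>K-{0}. Gs u * gs (Au b u) (- t)) \<le> real (q - 1) * real q ^ ((m + 1) div 2)"
proof (cases "Tr (b^2) = 0")
  case False
  have each: "norm (Gs u * gs (Au b u) (- t)) = real q ^ ((m + 1) div 2)" if u: "u \<in> K - {0}" for u
  proof -
    have A: "Au b u \<in> K" "Au b u \<noteq> 0" using Au_K[of u b] u False four_nz by (auto simp: Au_def)
    have "(norm (Gs u * gs (Au b u) (- t))) ^ 2 = norm (Gs u) ^ 2 * norm (gs (Au b u) (- t)) ^ 2"
      by (simp add: norm_mult power_mult_distrib)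
    also have "\<dots> = real q ^ m * real q" using Gs_abs[of u] gs_abs[OF A] t u by auto
    also have "\<dots> = (real q ^ ((m + 1) div 2)) ^ 2"
      using half_exp by (metis of_nat_mult of_nat_power power2_eq_square power_Suc2 Suc_eq_plus1)
    finally show ?thesis by (rule power2_eq_imp_eq) auto
  qed
  have "norm (\<Sum>u\<in>K-{0}. Gs u * gs (Au b u) (- t)) \<le> (\<Sum>u\<in>K-{0}. norm (Gs u * gs (Au b u) (- t)))"
    by (rule norm_sum)
  also have "\<dots> = (\<Sum>u\<in>K-{0}. real q ^ ((m + 1) div 2))" by (rule sum.cong) (auto simp: each)
  also have "\<dots> = real (q - 1) * real q ^ ((m + 1) div 2)"
    by (simp add: card_K card_Diff_singleton)
  finally show ?thesis .
next
  case True
  have A0: "Au b u = 0" for u by (simp add: Au_def True)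
  have gs0: "gs 0 (- t) = (if t = 0 then of_nat q else 0)"
    using chi_orth'[of "- t"] t K_uminus[OF t] card_K by (simp add: gs_def)
  show ?thesis
  proof (cases "t = 0")
    case True
    have "(\<Sum>u\<in>K-{0}. Gs u * gs (Au b u) (- t)) = of_nat q * (\<Sum>u\<in>K-{0}. Gs u)"
    proof -
      have gs00: "gs 0 0 = of_nat q" using gs0 True by simp
      show ?thesis by (simp add: A0 gs00 True sum_distrib_left mult.commute)
    qed
    also have "\<dots> = 0" by (simp add: sum_Gs)
    finally show ?thesis by simp
  next
    case False
    have "(\<Sum>u\<in>K-{0}. Gs u * gs (Au b u) (- t)) = 0"
      by (simp add: A0 gs0 False)
    thus ?thesis by simp
  qed
qed

lemma count_bound:
  assumes b: "b \<noteq> 0" and t: "t \<in> K"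
  shows "Ncnt b t \<le> q ^ (m - 2) + (q - 1) * q ^ ((m - 3) div 2)"
proof -
  let ?E = "\<Sum>u\<in>K-{0}. Gs u * gs (Au b u) (- t)"
  have eq: "of_nat (q^2 * Ncnt b t) = (of_nat (q^m) :: complex) + ?E" by (rule count_formula[OF b t])
  hence "Re (of_nat (q^2 * Ncnt b t)) = Re (of_nat (q^m) + ?E)" by simp
  hence "real (q^2 * Ncnt b t) = real (q^m) + Re ?E" by simp
  moreover have "Re ?E \<le> norm ?E" by (rule complex_Re_le_cmod)
  ultimately have "real (q^2 * Ncnt b t) \<le> real (q^m) + real (q - 1) * real q ^ ((m + 1) div 2)"
    using err_bound[OF t, of b] by linarith
  hence le: "q^2 * Ncnt b t \<le> q^m + (q - 1) * q ^ ((m + 1) div 2)"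
    by (metis of_nat_le_iff of_nat_add of_nat_mult of_nat_power)
  have e1: "q^m = q^2 * q^(m - 2)"
  proof -
    have "q^2 * q^(m-2) = q^(2 + (m-2))" by (simp only: power_add)
    moreover have "2 + (m - 2) = m" using m_ge by simp
    ultimately show ?thesis by metis
  qed
  have e2: "q ^ ((m + 1) div 2) = q^2 * q^((m - 3) div 2)"
  proof -
    have "(m + 1) div 2 = 2 + (m - 3) div 2" using m_ge m_odd by presburger
    thus ?thesis by (simp add: power_add power2_eq_square)
  qed
  have "q^2 * Ncnt b t \<le> q^2 * (q ^ (m - 2) + (q - 1) * q ^ ((m - 3) div 2))"
    using le e1 e2 by (simp add: algebra_simps)
  thus ?thesis using q_ge3 by simp
qed

end

context ctx
begin

definition Vk :: "nat \<Rightarrow> 'a set" where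
  "Vk k = (\<lambda>c. \<Sum>i<k. c i * \<alpha> ^ i) ` (PiE {..<k} (\<lambda>_. K))"

lemma Vk_mem: "(\<forall>i<k. c i \<in> K) \<Longrightarrow> (\<Sum>i<k. c i * \<alpha> ^ i) \<in> Vk k"
proof -
  assume c: "\<forall>i<k. c i \<in> K"
  have r1: "restrict c {..<k} \<in> PiE {..<k} (\<lambda>_. K)" using c by auto
  have r2: "(\<Sum>i<k. restrict c {..<k} i * \<alpha> ^ i) = (\<Sum>i<k. c i * \<alpha> ^ i)" by simp
  show ?thesis unfolding Vk_def by (rule image_eqI[where f="\<lambda>c. \<Sum>i<k. c i * \<alpha> ^ i", OF r2[symmetric] r1])
qed

lemma Vk_elim: "v \<in> Vk k \<Longrightarrow> \<exists>c. (\<forall>i<k. c i \<in> K) \<and> v = (\<Sum>i<k. c i * \<alpha> ^ i)"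
  unfolding Vk_def by (auto simp: PiE_def Pi_def)

lemma Vk_card: "card (Vk k) \<le> q ^ k"
proof -
  have "card (Vk k) \<le> card (PiE {..<k} (\<lambda>_. K))" unfolding Vk_def by (rule card_image_le) (simp add: finite_PiE)
  also have "\<dots> = q ^ k" by (simp add: card_PiE card_K)
  finally show ?thesis .
qed

lemma Vk_add: "v \<in> Vk k \<Longrightarrow> w \<in> Vk k \<Longrightarrow> v + w \<in> Vk k"
proof -
  assume vw: "v \<in> Vk k" "w \<in> Vk k"
  obtain c where c: "\<forall>i<k. c i \<in> K" "v = (\<Sum>i<k. c i * \<alpha> ^ i)" using Vk_elim[OF vw(1)] by blast
  obtain d where d: "\<forall>i<k. d i \<in> K" "w = (\<Sum>i<k. d i * \<alpha> ^ i)" using Vk_elim[OF vw(2)] by blast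
  have "(\<Sum>i<k. (c i + d i) * \<alpha> ^ i) = (\<Sum>i<k. c i * \<alpha> ^ i) + (\<Sum>i<k. d i * \<alpha> ^ i)"
    by (simp add: distrib_right sum.distrib)
  hence "v + w = (\<Sum>i<k. (c i + d i) * \<alpha> ^ i)" using c d by simp
  moreover have "\<forall>i<k. c i + d i \<in> K" using c d by auto
  ultimately show ?thesis using Vk_mem by simp
qed

lemma Vk_scale: "v \<in> Vk k \<Longrightarrow> s \<in> K \<Longrightarrow> s * v \<in> Vk k"
proof -
  assume vs: "v \<in> Vk k" "s \<in> K"
  obtain c where c: "\<forall>i<k. c i \<in> K" "v = (\<Sum>i<k. c i * \<alpha> ^ i)" using Vk_elim[OF vs(1)] by blast
  have "s * v = (\<Sum>i<k. (s * c i) * \<alpha> ^ i)" using c by (simp add: sum_distrib_left mult.assoc)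
  moreover have "\<forall>i<k. s * c i \<in> K" using c \<open>s \<in> K\<close> by auto
  ultimately show ?thesis using Vk_mem by simp
qed

lemma Vk_alpha:
  assumes ak: "\<alpha> ^ k \<in> Vk k" and v: "v \<in> Vk k"
  shows "\<alpha> * v \<in> Vk k"
proof -
  obtain c where c: "\<forall>i<k. c i \<in> K" "v = (\<Sum>i<k. c i * \<alpha> ^ i)" using Vk_elim v by blast
  define e where "e i = (if i = 0 then 0 else c (i - 1))" for i
  have "\<alpha> * v = (\<Sum>i<k. e (Suc i) * \<alpha> ^ (Suc i))"
    using c by (simp add: e_def sum_distrib_left mult_ac)
  also have "\<dots> = (\<Sum>i<Suc k. e i * \<alpha> ^ i)"
  proof -
    have "(\<Sum>i<Suc k. e i * \<alpha> ^ i) = e 0 * \<alpha> ^ 0 + (\<Sum>i<k. e (Suc i) * \<alpha> ^ (Suc i))"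
      by (rule sum.lessThan_Suc_shift)
    thus ?thesis by (simp add: e_def)
  qed
  also have "\<dots> = (\<Sum>i<k. e i * \<alpha> ^ i) + e k * \<alpha> ^ k" by simp
  finally have eq: "\<alpha> * v = (\<Sum>i<k. e i * \<alpha> ^ i) + e k * \<alpha> ^ k" .
  have eK: "e i \<in> K" if "i \<le> k" for i using c that by (auto simp: e_def)
  have "(\<Sum>i<k. e i * \<alpha> ^ i) \<in> Vk k" using eK by (intro Vk_mem) auto
  moreover have "e k * \<alpha> ^ k \<in> Vk k" using Vk_scale[OF ak eK[of k]] by simp
  ultimately show ?thesis using eq Vk_add by simp
qed

lemma lin_indep:
  assumes c: "\<forall>i<m. c i \<in> K" and z: "(\<Sum>i<m. c i * \<alpha> ^ i) = 0"
  shows "\<forall>i<m. c i = 0"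
proof (rule ccontr)
  assume neg: "\<not> (\<forall>i<m. c i = 0)"
  define I where "I = {i. i < m \<and> c i \<noteq> 0}"
  have I: "finite I" "I \<noteq> {}" using neg by (auto simp: I_def)
  define k where "k = Max I"
  have k: "k < m" "c k \<noteq> 0" using Max_in[OF I] by (auto simp: k_def I_def)
  have above: "c i = 0" if "k < i" "i < m" for i
  proof (rule ccontr)
    assume "c i \<noteq> 0"
    hence "i \<in> I" using that by (simp add: I_def)
    hence "i \<le> k" using Max_ge[OF I(1)] k_def by simp
    thus False using that by simp
  qed
  have "(\<Sum>i<m. c i * \<alpha> ^ i) = (\<Sum>i<Suc k. c i * \<alpha> ^ i)"
  proof -
    have "{..<m} = {..<Suc k} \<union> {Suc k..<m}" using k by auto
    hence "(\<Sum>i<m. c i * \<alpha> ^ i) = (\<Sum>i\<in>{..<Suc k} \<union> {Suc k..<m}. c i * \<alpha> ^ i)" by simp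
    also have "\<dots> = (\<Sum>i<Suc k. c i * \<alpha> ^ i) + (\<Sum>i\<in>{Suc k..<m}. c i * \<alpha> ^ i)"
      by (rule sum.union_disjoint) auto
    also have "(\<Sum>i\<in>{Suc k..<m}. c i * \<alpha> ^ i) = 0" using above by (intro sum.neutral) auto
    finally show ?thesis by simp
  qed
  hence z2: "(\<Sum>i<k. c i * \<alpha> ^ i) + c k * \<alpha> ^ k = 0" using z by simp
  have ak: "\<alpha> ^ k = (\<Sum>i<k. (- (c i / c k)) * \<alpha> ^ i)"
  proof -
    have "c k * \<alpha> ^ k = - (\<Sum>i<k. c i * \<alpha> ^ i)" using z2 by (simp add: eq_neg_iff_add_eq_0 add.commute)
    hence "\<alpha> ^ k = - (\<Sum>i<k. c i * \<alpha> ^ i) / c k" using k(2) by (simp add: field_simps)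
    also have "\<dots> = (\<Sum>i<k. (- (c i / c k)) * \<alpha> ^ i)"
      by (simp add: sum_divide_distrib sum_negf[symmetric])
    finally show ?thesis .
  qed
  have akV: "\<alpha> ^ k \<in> Vk k" unfolding ak
  proof (intro Vk_mem allI impI)
    fix i assume "i < k"
    hence "c i \<in> K" "c k \<in> K" using c k by auto
    thus "- (c i / c k) \<in> K" by blast
  qed
  have kpos: "k > 0"
  proof (rule ccontr)
    assume "\<not> k > 0"
    hence "k = 0" by simp
    thus False using z2 k(2) by simp
  qed
  have oneV: "1 \<in> Vk k"
  proof -
    have "(\<Sum>i<k. (if i = 0 then 1 else 0) * \<alpha> ^ i) = (\<Sum>i<k. if i = 0 then 1 else (0::'a))"
      by (rule sum.cong) auto
    also have "\<dots> = 1" using kpos by (simp add: sum.delta)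
    finally have "(\<Sum>i<k. (if i = 0 then 1 else 0) * \<alpha> ^ i) = 1" .
    moreover have "\<forall>i<k. (if i = 0 then 1 else (0::'a)) \<in> K" by auto
    ultimately show ?thesis using Vk_mem[of k "\<lambda>i. if i = 0 then 1 else 0"] by simp
  qed
  have powV: "\<alpha> ^ j \<in> Vk k" for j
  proof (induct j)
    case 0 thus ?case using oneV by simp
  next
    case (Suc j) thus ?case using Vk_alpha[OF akV] by simp
  qed
  have zeroV: "0 \<in> Vk k" using Vk_scale[OF oneV, of 0] by simp
  have "UNIV \<subseteq> Vk k"
  proof
    fix y :: 'a
    show "y \<in> Vk k"
    proof (cases "y = 0")
      case False then obtain j where "y = \<alpha> ^ j" using gen by blast
      thus ?thesis using powV by simp
    qed (use zeroV in simp)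
  qed
  hence "card (UNIV::'a set) \<le> card (Vk k)" by (intro card_mono) auto
  also have "\<dots> \<le> q ^ k" by (rule Vk_card)
  also have "\<dots> < q ^ m" using k q_ge3 by (intro power_strict_increasing) auto
  finally show False using card_F by simp
qed

end

lemma sum_split_add: "(\<Sum>i<(a::nat) + b. f i) = (\<Sum>i<a. f i) + (\<Sum>j<b. f (a + j))"
  by (induct b) (simp_all add: add.assoc)

locale ctx2 = ctx p e q m \<alpha> for p e q m :: nat and \<alpha> :: "'a::{finite,field}" +
  fixes d :: "nat \<Rightarrow> 'a" and n :: nat
  assumes n_def: "n = card {x::'a. trace q m (x^2) = 0}"
    and dbij: "bij_betw d {..<n} {x::'a. trace q m (x^2) = 0}"
begin

abbreviation D :: "'a set" where "D \<equiv> {x::'a. Tr (x^2) = 0}"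

lemma n_eq: "n = q ^ (m - 1)" using n_def card_D by simp

abbreviation NN :: nat where "NN \<equiv> q ^ (m - 1) + m + 1"

lemma NN_eq: "NN = m + 1 + n" using n_eq by simp

abbreviation G :: "nat \<Rightarrow> nat \<Rightarrow> 'a" where "G \<equiv> G2' q m \<alpha> d"

lemma G_id: "c < m + 1 \<Longrightarrow> G r c = (if r = c then 1 else 0)"
  by (simp add: G2'_def)

lemma G_col: "G r (m + 1 + j) = (if r = 0 then 0 else Tr (\<alpha> ^ (r - 1) * d j)) + (if r = 0 \<or> r = 2 then 1 else 0)"
  by (cases "r = 1") (auto simp: G2'_def Let_def)

lemma G_K: "G r c \<in> K"
  unfolding G2'_def Let_def using Tr_in_K K_add[OF Tr_in_K K_1] by auto

definition cw :: "(nat \<Rightarrow> 'a) \<Rightarrow> nat \<Rightarrow> 'a" where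
  "cw a = (\<lambda>c. if c < NN then (\<Sum>r<m + 1. a r * G r c) else 0)"

definition bb :: "(nat \<Rightarrow> 'a) \<Rightarrow> 'a" where "bb a = (\<Sum>i<m. a (Suc i) * \<alpha> ^ i)"

lemma cw_low: assumes "c < m + 1" shows "cw a c = a c"
proof -
  have "(\<Sum>r<m + 1. a r * G r c) = (\<Sum>r<m + 1. if r = c then a r else 0)"
    by (rule sum.cong) (use assms in \<open>auto simp: G2'_def\<close>)
  also have "\<dots> = a c" using assms by (simp only: sum.delta finite_lessThan lessThan_iff if_True)
  finally show ?thesis using assms by (simp add: cw_def)
qed

lemma cw_high:
  assumes a: "\<forall>r<m+1. a r \<in> K" and j: "j < n"
  shows "cw a (m + 1 + j) = Tr (bb a * d j) + (a 0 + a 2)"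
proof -
  have "cw a (m + 1 + j) = (\<Sum>r<m + 1. a r * G r (m + 1 + j))" using j n_eq by (simp add: cw_def)
  also have "\<dots> = (\<Sum>r<m + 1. a r * (if r = 0 then 0 else Tr (\<alpha> ^ (r - 1) * d j)))
                 + (\<Sum>r<m + 1. a r * (if r = 0 \<or> r = 2 then 1 else 0))"
    by (simp only: G_col distrib_left sum.distrib)
  also have "(\<Sum>r<m + 1. a r * (if r = 0 \<or> r = 2 then 1 else 0)) = (\<Sum>r<m + 1. if r \<in> {0,2} then a r else 0)"
    by (rule sum.cong) auto
  also have "\<dots> = (\<Sum>r\<in>{..<m+1} \<inter> {0,2}. a r)"
    by (rule sum.inter_restrict[symmetric]) simp
  also have "{..<m+1} \<inter> {0,2} = {0, 2::nat}" using m_ge by auto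
  also have "(\<Sum>r\<in>{0, 2::nat}. a r) = a 0 + a 2" by simp
  also have "(\<Sum>r<m + 1. a r * (if r = 0 then 0 else Tr (\<alpha> ^ (r - 1) * d j)))
      = (\<Sum>i<m. a (Suc i) * Tr (\<alpha> ^ i * d j))"
    by (simp only: Suc_eq_plus1[symmetric] sum.lessThan_Suc_shift) simp
  also have "\<dots> = (\<Sum>i<m. Tr (a (Suc i) * \<alpha> ^ i * d j))"
    using a by (intro sum.cong refl) (simp add: Tr_scale mult.assoc)
  also have "\<dots> = Tr (bb a * d j)" by (simp add: Tr_sum bb_def sum_distrib_right)
  finally show ?thesis .
qed

lemma cw_K: "\<forall>r<m+1. a r \<in> K \<Longrightarrow> cw a c \<in> K"
  using G_K by (auto simp: cw_def intro!: K_sum K_mult)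

lemma cw_words: "\<forall>r<m+1. a r \<in> K \<Longrightarrow> cw a \<in> words q NN"
  using cw_K by (auto simp: words_def) (simp add: cw_def)

lemma cw_restrict: "cw (restrict a {..<m+1}) = cw a"
proof -
  have "\<And>c. (\<Sum>r<m + 1. restrict a {..<m+1} r * G r c) = (\<Sum>r<m + 1. a r * G r c)"
    by (rule sum.cong) auto
  thus ?thesis unfolding cw_def by (intro ext) (simp only:)
qed

abbreviation AA :: "(nat \<Rightarrow> 'a) set" where "AA \<equiv> PiE {..<m+1} (\<lambda>_. K)"

lemma C_eq: "gen_code q (m + 1) NN G = cw ` AA"
proof
  show "gen_code q (m + 1) NN G \<subseteq> cw ` AA"
  proof
    fix v assume "v \<in> gen_code q (m + 1) NN G"
    then obtain a where a: "\<forall>r<m+1. a r \<in> K" "v = cw a" unfolding gen_code_def cw_def by blast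
    have "restrict a {..<m+1} \<in> AA" using a by auto
    thus "v \<in> cw ` AA" using a cw_restrict by (metis image_eqI)
  qed
  show "cw ` AA \<subseteq> gen_code q (m + 1) NN G"
  proof
    fix v assume "v \<in> cw ` AA"
    then obtain a where a: "a \<in> AA" "v = cw a" by blast
    have "\<forall>r<m+1. a r \<in> K" using a by auto
    thus "v \<in> gen_code q (m + 1) NN G" unfolding gen_code_def a(2) cw_def by blast
  qed
qed

lemma cw_inj: "inj_on cw AA"
proof (rule inj_onI)
  fix a a' assume aa: "a \<in> AA" "a' \<in> AA" "cw a = cw a'"
  have "a i = a' i" if "i \<in> {..<m+1}" for i
    using cw_low[of i a] cw_low[of i a'] aa(3) that by simp
  thus "a = a'" by (rule PiE_ext[OF aa(1) aa(2)])
qed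

lemma card_C: "card (gen_code q (m + 1) NN G) = q ^ (m + 1)"
  using C_eq card_image[OF cw_inj] by (simp add: card_PiE card_K)

lemma card_dpart: "card {j. j < n \<and> P (d j)} = card {x \<in> D. P x}"
proof -
  have inj: "inj_on d {j. j < n \<and> P (d j)}"
    using dbij by (auto simp: bij_betw_def intro: inj_on_subset)
  have "d ` {j. j < n \<and> P (d j)} = {x \<in> D. P x}"
    using dbij by (auto simp: bij_betw_def)
  thus ?thesis using card_image[OF inj] by simp
qed

lemma wt_split:
  assumes a: "\<forall>r<m+1. a r \<in> K"
  shows "weight NN (cw a) = card {i. i < m + 1 \<and> a i \<noteq> 0}
           + card {x \<in> D. Tr (bb a * x) + (a 0 + a 2) \<noteq> 0}"
proof -
  have "{i. i < NN \<and> cw a i \<noteq> 0} = {i. i < m + 1 \<and> a i \<noteq> 0}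
          \<union> (\<lambda>j. m + 1 + j) ` {j. j < n \<and> Tr (bb a * d j) + (a 0 + a 2) \<noteq> 0}"
  proof (rule set_eqI, rule iffI)
    fix i assume i: "i \<in> {i. i < NN \<and> cw a i \<noteq> 0}"
    show "i \<in> {i. i < m + 1 \<and> a i \<noteq> 0} \<union> (\<lambda>j. m + 1 + j) ` {j. j < n \<and> Tr (bb a * d j) + (a 0 + a 2) \<noteq> 0}"
    proof (cases "i < m + 1")
      case True thus ?thesis using i cw_low by auto
    next
      case False
      then obtain j where j: "i = m + 1 + j" by (metis le_add_diff_inverse not_less)
      have "j < n" using i j NN_eq by simp
      thus ?thesis using i j cw_high[OF a] by auto
    qed
  next
    fix i assume "i \<in> {i. i < m + 1 \<and> a i \<noteq> 0} \<union> (\<lambda>j. m + 1 + j) ` {j. j < n \<and> Tr (bb a * d j) + (a 0 + a 2) \<noteq> 0}"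
    thus "i \<in> {i. i < NN \<and> cw a i \<noteq> 0}" using cw_low cw_high[OF a] NN_eq by auto
  qed
  moreover have "card ({i. i < m + 1 \<and> a i \<noteq> 0}
          \<union> (\<lambda>j. m + 1 + j) ` {j. j < n \<and> Tr (bb a * d j) + (a 0 + a 2) \<noteq> 0})
        = card {i. i < m + 1 \<and> a i \<noteq> 0} + card ((\<lambda>j. m + 1 + j) ` {j. j < n \<and> Tr (bb a * d j) + (a 0 + a 2) \<noteq> 0})"
    by (rule card_Un_disjoint) auto
  moreover have "card ((\<lambda>j. m + 1 + j) ` {j. j < n \<and> Tr (bb a * d j) + (a 0 + a 2) \<noteq> 0})
        = card {j. j < n \<and> Tr (bb a * d j) + (a 0 + a 2) \<noteq> 0}"
    by (rule card_image) (simp add: inj_on_def)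
  ultimately show ?thesis
    using card_dpart[of "\<lambda>x. Tr (bb a * x) + (a 0 + a 2) \<noteq> 0"] by (simp add: weight_def)
qed

definition Bd :: nat where "Bd = (q - 1) * q ^ ((m - 3) div 2) * (q ^ ((m - 1) div 2) - 1)"

lemma Bd_identity: "Bd + (q ^ (m - 2) + (q - 1) * q ^ ((m - 3) div 2)) = q ^ (m - 1)"
proof -
  define X where "X = q ^ ((m - 3) div 2)"
  define Y where "Y = q ^ ((m - 1) div 2)"
  have Y1: "Y \<ge> 1" using q_ge3 by (simp add: Y_def)
  have e1: "q ^ (m - 2) = X * Y"
  proof -
    have "(m - 3) div 2 + (m - 1) div 2 = m - 2" using m_ge m_odd by presburger
    thus ?thesis by (simp add: X_def Y_def flip: power_add)
  qed
  have e2: "q ^ (m - 1) = q * (X * Y)"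
  proof -
    have "m - 1 = Suc (m - 2)" using m_ge by simp
    thus ?thesis using e1 by simp
  qed
  have "Bd + (q ^ (m - 2) + (q - 1) * q ^ ((m - 3) div 2)) = (q - 1) * X * (Y - 1) + (X * Y + (q - 1) * X)"
    by (simp add: Bd_def X_def Y_def e1)
  also have "\<dots> = (q - 1) * X * Y + X * Y"
  proof -
    have "(q - 1) * X * (Y - 1) + (q - 1) * X = (q - 1) * X * Y"
      using Y1 by (metis Suc_diff_1 less_le_trans mult_Suc_right zero_less_one add.commute)
    thus ?thesis by simp
  qed
  also have "\<dots> = q * (X * Y)" using q_ge3 by (cases q) (auto simp: algebra_simps)
  finally show ?thesis using e2 by simp
qed

lemma weight_bound:
  assumes aA: "a \<in> AA" and nz: "cw a \<noteq> (\<lambda>_. 0)"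
  shows "weight NN (cw a) \<ge> Bd + 1"
proof -
  have a: "\<forall>r<m+1. a r \<in> K" using aA by auto
  have ex: "\<exists>i<m+1. a i \<noteq> 0"
  proof (rule ccontr)
    assume "\<not> ?thesis"
    hence "cw a = (\<lambda>_. 0)" by (auto simp: cw_def)
    thus False using nz by simp
  qed
  have w1: "card {i. i < m + 1 \<and> a i \<noteq> 0} \<ge> 1"
  proof -
    obtain i where "i < m + 1" "a i \<noteq> 0" using ex by blast
    hence "{i. i < m + 1 \<and> a i \<noteq> 0} \<noteq> {}" by auto
    thus ?thesis by (simp add: Suc_le_eq card_gt_0_iff)
  qed
  let ?c = "a 0 + a 2"
  have w2: "card {x \<in> D. Tr (bb a * x) + ?c \<noteq> 0} \<ge> Bd"
  proof (cases "bb a = 0")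
    case True
    have "\<forall>i<m. a (Suc i) = 0"
      using lin_indep[of "\<lambda>i. a (Suc i)"] a True by (auto simp: bb_def)
    have "a 0 \<noteq> 0"
    proof -
      obtain i where i: "i < m + 1" "a i \<noteq> 0" using ex by blast
      show ?thesis
      proof (cases i)
        case (Suc k)
        hence "k < m" using i by simp
        thus ?thesis using i Suc \<open>\<forall>i<m. a (Suc i) = 0\<close> by simp
      qed (use i in simp)
    qed
    moreover have "a 2 = 0"
    proof -
      have "a (Suc 1) = 0" using \<open>\<forall>i<m. a (Suc i) = 0\<close> m_ge by simp
      thus ?thesis by (simp add: numeral_2_eq_2)
    qed
    ultimately have "{x \<in> D. Tr (bb a * x) + ?c \<noteq> 0} = D" using True by auto
    hence "card {x \<in> D. Tr (bb a * x) + ?c \<noteq> 0} = q ^ (m - 1)" using card_D by simp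
    thus ?thesis using Bd_identity by linarith
  next
    case False
    have "a 0 \<in> K" "a 2 \<in> K" using a m_ge by auto
    hence cK: "- ?c \<in> K" by (intro K_uminus K_add)
    have "{x \<in> D. Tr (bb a * x) + ?c \<noteq> 0} = D - {x. Tr (x^2) = 0 \<and> Tr (bb a * x) = - ?c}"
    proof -
      define c0 where "c0 = ?c"
      have "{x \<in> D. Tr (bb a * x) + c0 \<noteq> 0} = D - {x. Tr (x^2) = 0 \<and> Tr (bb a * x) = - c0}"
        by (auto simp: eq_neg_iff_add_eq_0)
      thus ?thesis by (simp add: c0_def)
    qed
    hence "card {x \<in> D. Tr (bb a * x) + ?c \<noteq> 0} = card D - Ncnt (bb a) (- ?c)"
      using card_Diff_subset[of "{x. Tr (x^2) = 0 \<and> Tr (bb a * x) = - ?c}" D] by (auto simp: Ncnt_def)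
    moreover have "Ncnt (bb a) (- ?c) \<le> q ^ (m - 2) + (q - 1) * q ^ ((m - 3) div 2)"
      by (rule count_bound[OF False cK])
    ultimately show ?thesis using card_D Bd_identity by linarith
  qed
  show ?thesis using wt_split[OF a] w1 w2 by linarith
qed

end

context ctx2
begin

abbreviation CC where "CC \<equiv> gen_code q (m + 1) NN G"

lemma finite_CC: "finite CC" using C_eq by (simp add: finite_PiE)

lemma CC_words: "CC \<subseteq> words q NN" using C_eq cw_words by auto

lemma min_dist_CC: "min_dist NN CC \<ge> Bd + 1"
proof -
  define a0 where "a0 = restrict (\<lambda>r. if r = 0 then (1::'a) else 0) {..<m+1}"
  have a0: "a0 \<in> AA" by (auto simp: a0_def)
  have "cw a0 0 = 1" using cw_low[of 0 a0] by (simp add: a0_def)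
  hence "cw a0 \<noteq> (\<lambda>_. 0)" by (metis one_neq_zero)
  hence "cw a0 \<in> CC - {(\<lambda>_. 0)}" using a0 C_eq by auto
  hence ne: "weight NN ` (CC - {(\<lambda>_. 0)}) \<noteq> {}" by blast
  have fin: "finite (weight NN ` (CC - {(\<lambda>_. 0)}))" using finite_CC by simp
  have "\<forall>w\<in>weight NN ` (CC - {(\<lambda>_. 0)}). Bd + 1 \<le> w"
    using C_eq weight_bound by auto
  thus ?thesis unfolding min_dist_def using Min_ge_iff[OF fin ne] by blast
qed

definition L :: "(nat \<Rightarrow> 'a) \<Rightarrow> nat \<Rightarrow> 'a" where
  "L v r = v r + (\<Sum>j<n. v (m + 1 + j) * G r (m + 1 + j))"

lemma inner_cw: "(\<Sum>i<NN. v i * cw a i) = (\<Sum>r<m+1. a r * L v r)"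
proof -
  have "(\<Sum>i<NN. v i * cw a i) = (\<Sum>i<NN. \<Sum>r<m+1. a r * (v i * G r i))"
  proof (rule sum.cong[OF refl])
    fix i assume "i \<in> {..<NN}"
    hence "cw a i = (\<Sum>r<m+1. a r * G r i)" by (simp add: cw_def)
    thus "v i * cw a i = (\<Sum>r<m+1. a r * (v i * G r i))" by (simp only: sum_distrib_left mult.left_commute)
  qed
  also have "\<dots> = (\<Sum>r<m+1. a r * (\<Sum>i<NN. v i * G r i))"
    by (subst sum.swap) (simp only: sum_distrib_left)
  also have "\<dots> = (\<Sum>r<m+1. a r * L v r)"
  proof (rule sum.cong[OF refl])
    fix r assume r: "r \<in> {..<m+1}"
    have "(\<Sum>i<NN. v i * G r i) = (\<Sum>i<m+1+n. v i * G r i)" by (simp only: NN_eq)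
    also have "\<dots> = (\<Sum>i<m+1. v i * G r i) + (\<Sum>j<n. v (m + 1 + j) * G r (m + 1 + j))"
      by (rule sum_split_add)
    also have "(\<Sum>i<m+1. v i * G r i) = (\<Sum>i<m+1. if i = r then v i else 0)"
      by (rule sum.cong) (auto simp: G_id)
    also have "\<dots> = v r" by (simp only: sum.delta finite_lessThan r if_True)
    finally show "a r * (\<Sum>i<NN. v i * G r i) = a r * L v r" by (simp add: L_def)
  qed
  finally show ?thesis .
qed

abbreviation DC where "DC \<equiv> dual_code q NN CC"

lemma dual_iff: "v \<in> DC \<longleftrightarrow> v \<in> words q NN \<and> (\<forall>r<m+1. L v r = 0)"
proof
  assume v: "v \<in> DC"
  hence w: "v \<in> words q NN" by (simp add: dual_code_def)
  have "L v r = 0" if r: "r < m + 1" for r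
  proof -
    define er where "er = restrict (\<lambda>i. if i = r then (1::'a) else 0) {..<m+1}"
    have "er \<in> AA" by (auto simp: er_def)
    hence "cw er \<in> CC" using C_eq by auto
    hence "(\<Sum>i<NN. v i * cw er i) = 0" using v by (simp add: dual_code_def)
    hence "(\<Sum>i<m+1. er i * L v i) = 0" by (simp only: inner_cw)
    moreover have "(\<Sum>i<m+1. er i * L v i) = (\<Sum>i<m+1. if i = r then L v i else 0)"
      by (rule sum.cong) (auto simp: er_def)
    moreover have "\<dots> = L v r" using r by (simp only: sum.delta finite_lessThan lessThan_iff if_True)
    ultimately show ?thesis by simp
  qed
  thus "v \<in> words q NN \<and> (\<forall>r<m+1. L v r = 0)" using w by simp
next
  assume v: "v \<in> words q NN \<and> (\<forall>r<m+1. L v r = 0)"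
  have "(\<Sum>i<NN. v i * c i) = 0" if c: "c \<in> CC" for c
  proof -
    obtain a where "c = cw a" using c C_eq by auto
    thus ?thesis using inner_cw[of v a] v by simp
  qed
  thus "v \<in> DC" using v by (simp add: dual_code_def)
qed

definition phi :: "(nat \<Rightarrow> 'a) \<Rightarrow> nat \<Rightarrow> 'a" where
  "phi w = (\<lambda>i. if i < m + 1 then - (\<Sum>j<n. w j * G i (m + 1 + j))
                else if i < NN then w (i - (m + 1)) else 0)"

abbreviation WW where "WW \<equiv> PiE {..<n} (\<lambda>_. K)"

lemma phi_high: "j < n \<Longrightarrow> phi w (m + 1 + j) = w j"
  using NN_eq by (simp add: phi_def)

lemma phi_in: assumes w: "w \<in> WW" shows "phi w \<in> DC"
proof -
  have wK: "w j \<in> K" if "j < n" for j using w that by auto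
  have "phi w \<in> words q NN"
  proof -
    have "phi w i \<in> K" if "i < NN" for i
    proof (cases "i < m + 1")
      case True
      have "(\<Sum>j<n. w j * G i (m + 1 + j)) \<in> K" using wK G_K by (intro K_sum) auto
      thus ?thesis using True by (simp add: phi_def K_uminus)
    next
      case False
      hence "i - (m + 1) < n" using that NN_eq by simp
      thus ?thesis using False that wK by (simp add: phi_def)
    qed
    moreover have "phi w i = 0" if "i \<ge> NN" for i using that by (simp add: phi_def)
    ultimately show ?thesis by (simp add: words_def)
  qed
  moreover have "L (phi w) r = 0" if "r < m + 1" for r
  proof -
    have se: "(\<Sum>j<n. phi w (m + 1 + j) * G r (m + 1 + j)) = (\<Sum>j<n. w j * G r (m + 1 + j))"
      by (rule sum.cong) (auto simp: phi_high[simplified])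
    have e: "phi w r = - (\<Sum>j<n. w j * G r (m + 1 + j))" using that by (simp add: phi_def)
    show ?thesis by (simp only: L_def se e add.left_inverse)
  qed
  ultimately show ?thesis using dual_iff by simp
qed

lemma DC_eq: "DC = phi ` WW"
proof
  show "phi ` WW \<subseteq> DC" using phi_in by auto
  show "DC \<subseteq> phi ` WW"
  proof
    fix v assume v: "v \<in> DC"
    hence vw: "v \<in> words q NN" and vL: "\<forall>r<m+1. L v r = 0" using dual_iff by auto
    define w where "w = restrict (\<lambda>j. v (m + 1 + j)) {..<n}"
    have "w \<in> WW" using vw NN_eq by (auto simp: w_def words_def)
    moreover have "phi w = v"
    proof
      fix i
      show "phi w i = v i"
      proof (cases "i < m + 1")
        case True
        have "(\<Sum>j<n. w j * G i (m + 1 + j)) = (\<Sum>j<n. v (m + 1 + j) * G i (m + 1 + j))"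
          by (rule sum.cong) (auto simp: w_def)
        moreover have "v i + (\<Sum>j<n. v (m + 1 + j) * G i (m + 1 + j)) = 0"
          using vL True by (simp add: L_def)
        ultimately have "v i = - (\<Sum>j<n. w j * G i (m + 1 + j))" by (simp add: eq_neg_iff_add_eq_0)
        thus ?thesis using True by (simp add: phi_def)
      next
        case False
        show ?thesis
        proof (cases "i < NN")
          case True
          hence "i - (m + 1) < n" using False NN_eq by simp
          thus ?thesis using False True by (simp add: phi_def w_def)
        next
          case F2: False
          thus ?thesis using False vw by (simp add: phi_def words_def)
        qed
      qed
    qed
    ultimately show "v \<in> phi ` WW" by blast
  qed
qed

lemma phi_inj: "inj_on phi WW"
proof (rule inj_onI)
  fix w w' assume ww: "w \<in> WW" "w' \<in> WW" "phi w = phi w'"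
  have "w j = w' j" if "j \<in> {..<n}" for j using phi_high[of j w] phi_high[of j w'] ww(3) that by simp
  thus "w = w'" by (rule PiE_ext[OF ww(1) ww(2)])
qed

lemma card_DC: "card DC = q ^ (q ^ (m - 1))"
  using DC_eq card_image[OF phi_inj] n_eq by (simp add: card_PiE card_K)

lemma finite_DC: "finite DC" using DC_eq by (simp add: finite_PiE)

end

context ctx2
begin

lemma G_row0: "G 0 (m + 1 + j) = 1" using G_col[of 0 j] by simp

lemma weight_ge2:
  assumes v: "v \<in> DC" and nz: "v \<noteq> (\<lambda>_. 0)"
  shows "weight NN v \<ge> 2"
proof (rule ccontr)
  assume lt: "\<not> weight NN v \<ge> 2"
  have vw: "v \<in> words q NN" and vL: "\<forall>r<m+1. L v r = 0" using v dual_iff by auto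
  define S where "S = {i. i < NN \<and> v i \<noteq> 0}"
  have fin: "finite S" by (simp add: S_def)
  have "S \<noteq> {}"
  proof
    assume "S = {}"
    hence "v i = 0" for i using vw by (cases "i < NN") (auto simp: S_def words_def)
    thus False using nz by auto
  qed
  moreover have "card S \<le> 1" using lt by (simp add: weight_def S_def)
  ultimately have "card S = 1" using fin by (simp add: card_gt_0_iff le_antisym Suc_le_eq)
  then obtain i0 where S0: "S = {i0}" by (rule card_1_singletonE)
  have i0: "i0 < NN" "v i0 \<noteq> 0" using S0 by (auto simp: S_def)
  have other: "v i = 0" if "i \<noteq> i0" for i
  proof (cases "i < NN")
    case True thus ?thesis using that S0 by (auto simp: S_def)
  next
    case False thus ?thesis using vw by (simp add: words_def)
  qed
  show False
  proof (cases "i0 < m + 1")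
    case True
    have "(\<Sum>j<n. v (m + 1 + j) * G i0 (m + 1 + j)) = 0"
      using True other by (intro sum.neutral) auto
    hence "L v i0 = v i0" by (simp add: L_def)
    thus False using vL True i0 by simp
  next
    case False
    then obtain j0 where j0: "i0 = m + 1 + j0" by (metis le_add_diff_inverse not_less)
    have j0n: "j0 < n" using i0 j0 NN_eq by simp
    have "(\<Sum>j<n. v (m + 1 + j) * G 0 (m + 1 + j)) = (\<Sum>j<n. if j = j0 then v i0 else 0)"
      by (rule sum.cong) (auto simp: G_row0[simplified] j0 other)
    also have "\<dots> = v i0" using j0n by simp
    finally have "L v 0 = v 0 + v i0" by (simp add: L_def)
    moreover have "v 0 = 0" using other j0 by simp
    ultimately have "L v 0 = v i0" by simp
    thus False using vL i0 by simp
  qed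
qed

lemma weight3_exists: "\<exists>v\<in>DC. v \<noteq> (\<lambda>_. 0) \<and> weight NN v = 3"
proof -
  have "(0::'a) \<in> D" by simp
  hence "(0::'a) \<in> d ` {..<n}" using dbij by (simp add: bij_betw_def)
  then obtain j0 where j0: "j0 < n" "d j0 = 0" by (metis imageE lessThan_iff)
  define w0 where "w0 = restrict (\<lambda>j. if j = j0 then (1::'a) else 0) {..<n}"
  have w0: "w0 \<in> WW" by (auto simp: w0_def)
  define v0 where "v0 = phi w0"
  have v0DC: "v0 \<in> DC" using phi_in[OF w0] by (simp add: v0_def)
  have low: "v0 i = (if i = 0 \<or> i = 2 then -1 else 0)" if "i < m + 1" for i
  proof -
    have "(\<Sum>j<n. w0 j * G i (m + 1 + j)) = (\<Sum>j<n. if j = j0 then G i (m + 1 + j) else 0)"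
      by (rule sum.cong) (auto simp: w0_def)
    also have "\<dots> = G i (m + 1 + j0)" using j0 by simp
    also have "\<dots> = (if i = 0 \<or> i = 2 then 1 else 0)" using G_col[of i j0] j0 by simp
    finally show ?thesis using that by (simp add: v0_def phi_def)
  qed
  have high: "v0 (m + 1 + j) = (if j = j0 then 1 else 0)" if "j < n" for j
    using phi_high[OF that, of w0] that by (simp add: v0_def w0_def)
  have S: "{i. i < NN \<and> v0 i \<noteq> 0} = {0, 2, m + 1 + j0}"
  proof (rule set_eqI)
    fix i
    show "i \<in> {i. i < NN \<and> v0 i \<noteq> 0} \<longleftrightarrow> i \<in> {0, 2, m + 1 + j0}"
    proof (cases "i < m + 1")
      case True
      thus ?thesis using low[OF True] NN_eq m_ge by auto
    next
      case False
      then obtain j where j: "i = m + 1 + j" by (metis le_add_diff_inverse not_less)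
      show ?thesis
      proof (cases "j < n")
        case True thus ?thesis using high[OF True] j NN_eq m_ge by auto
      next
        case F2: False
        hence "\<not> i < NN" using j NN_eq by simp
        moreover have "i \<noteq> m + 1 + j0" using j F2 j0 by auto
        ultimately show ?thesis using False m_ge by auto
      qed
    qed
  qed
  have c3: "card {0, 2, m + 1 + j0} = 3" using m_ge by simp
  have "weight NN v0 = 3" unfolding weight_def S by (rule c3)
  moreover have "v0 \<noteq> (\<lambda>_. 0)"
  proof
    assume "v0 = (\<lambda>_. 0)"
    hence "v0 0 = 0" by simp
    thus False using low[of 0] by simp
  qed
  ultimately show ?thesis using v0DC by blast
qed

lemma min_dist_DC: "2 \<le> min_dist NN DC \<and> min_dist NN DC \<le> 3"
proof -
  obtain v0 where v0: "v0 \<in> DC" "v0 \<noteq> (\<lambda>_. 0)" "weight NN v0 = 3" using weight3_exists by blast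
  have fin: "finite (weight NN ` (DC - {(\<lambda>_. 0)}))" using finite_DC by simp
  have mem: "3 \<in> weight NN ` (DC - {(\<lambda>_. 0)})" using v0 by (metis DiffI image_eqI singletonD)
  hence ne: "weight NN ` (DC - {(\<lambda>_. 0)}) \<noteq> {}" by blast
  have "\<forall>w\<in>weight NN ` (DC - {(\<lambda>_. 0)}). 2 \<le> w" using weight_ge2 by auto
  hence "2 \<le> min_dist NN DC" unfolding min_dist_def using Min_ge_iff[OF fin ne] by blast
  moreover have "min_dist NN DC \<le> 3" unfolding min_dist_def using Min_le[OF fin mem] .
  ultimately show ?thesis by simp
qed

end

theorem theorem3p19:
  fixes p e q m n :: nat and \<alpha> :: "'a::{finite,field}" and d :: "nat \<Rightarrow> 'a"
  assumes "prime p" and "odd p" and "e \<ge> 1" and "q = p ^ e"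
    and "m \<ge> 3" and "odd m"
    and "card (UNIV :: 'a set) = q ^ m"
    and "n = card {x::'a. trace q m (x ^ 2) = 0}"
    and "bij_betw d {..<n} {x::'a. trace q m (x ^ 2) = 0}"
    and "\<forall>y::'a. y \<noteq> 0 \<longrightarrow> (\<exists>k::nat. y = \<alpha> ^ k)"
  shows "n = q ^ (m - 1) \<and>
    (\<exists>d'. code_params q (gen_code q (m + 1) (q ^ (m - 1) + m + 1) (G2' q m \<alpha> d))
              (q ^ (m - 1) + m + 1) (m + 1) d'
         \<and> d' \<ge> (q - 1) * q ^ ((m - 3) div 2) * (q ^ ((m - 1) div 2) - 1) + 1) \<and>
    (\<exists>d'\<^sub>p. code_params q (dual_code q (q ^ (m - 1) + m + 1)
                (gen_code q (m + 1) (q ^ (m - 1) + m + 1) (G2' q m \<alpha> d)))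
              (q ^ (m - 1) + m + 1) (q ^ (m - 1)) d'\<^sub>p
         \<and> 2 \<le> d'\<^sub>p \<and> d'\<^sub>p \<le> 3)"
proof -
  interpret ctx2 p e q m \<alpha> d n
    using assms by unfold_locales auto
  have A: "n = q ^ (m - 1)" by (rule n_eq)
  have B: "code_params q CC NN (m + 1) (min_dist NN CC)
      \<and> min_dist NN CC \<ge> (q - 1) * q ^ ((m - 3) div 2) * (q ^ ((m - 1) div 2) - 1) + 1"
    using CC_words card_C min_dist_CC by (simp add: code_params_def Bd_def)
  have C: "code_params q DC NN (q ^ (m - 1)) (min_dist NN DC) \<and> 2 \<le> min_dist NN DC \<and> min_dist NN DC \<le> 3"
    using card_DC min_dist_DC by (auto simp: code_params_def dual_code_def)
  show ?thesis using A B C by blast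
qed

end
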